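(* Let $\psi=(N,h):\Sigma\to\mathbb{H}^2\times\mathbb{R}$ be a conformal immersion with regular vertical projection which, with respect to its canonical orientation ($u>0$), has constant mean curvature $H=1/2$. Then its hyperbolic Gauss map $G:\Sigma\to\mathbb{H}^2$ is harmonic, and $\langle G_z,G_z\rangle=-Q$, where $Q\,dz^2$ is the Abresch–Rosenberg differential of $\psi$.
   Context: $\mathbb{L}^4$ is $\mathbb{R}^4$ with metric $\langle,\rangle=-dx_0^2+dx_1^2+dx_2^2+dx_3^2$, $\mathbb{L}^3$ the subspace of the first three coordinates, $\mathbb{H}^2=\{x\in\mathbb{L}^3:\langle x,x\rangle=-1,x_0>0\}$, and $\mathbb{H}^2\times\mathbb{R}\subset\mathbb{L}^4$. A surface is a conformal immersion $\psi=(N,h):\Sigma\to\mathbb{H}^2\times\mathbb{R}$ of a connected Riemann surface, with $N:\Sigma\to\mathbb{H}^2$ (vertical projection), $h:\Sigma\to\mathbb{R}$ (height function, assumed not locally constant), induced metric $\lambda|dz|^2$ for a local conformal parameter $z$. Its unit normal $\eta=(\hat N,u)$ is the unit vector field in $\mathbb{L}^4$ orthogonal to $\psi_z,\psi_{\bar z}$ and to $N$ (i.e. normal to $\psi$ and tangent to $\mathbb{H}^2\times\mathbb{R}$); $u$ is the angle function. The Hopf differential is $p\,dz^2=-\langle\psi_z,\eta_z\rangle dz^2$, $H$ is the mean curvature, and the Abresch–Rosenberg differential is $Q\,dz^2$ with $Q=2Hp+h_z^2$. $\psi$ has regular vertical projection if $dN$ is an isomorphism everywhere, equivalently $u$ never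 vanishes; such a surface is canonically oriented so that $u>0$. Its hyperbolic Gauss map is the map $G:\Sigma\to\mathbb{H}^2$ defined by $(G,1)=\frac1u(\eta+N)$ (this vector lies in the future light cone and has last coordinate $1$). *)

theory Defs
  imports "HOL-Analysis.Analysis"
begin

text \<open>Lorentzian bilinear forms on L^3 and L^4 (first coordinate timelike).
  Polymorphic in the scalar ring so that they serve both as the real form and
  as its complex-bilinear extension.\<close>

definition lor3 :: "'a::comm_ring_1 ^ 3 \<Rightarrow> 'a ^ 3 \<Rightarrow> 'a" where
  "lor3 x y = - (x$1 * y$1) + x$2 * y$2 + x$3 * y$3"

definition lor4 :: "'a::comm_ring_1 ^ 4 \<Rightarrow> 'a ^ 4 \<Rightarrow> 'a" where
  "lor4 x y = - (x$1 * y$1) + x$2 * y$2 + x$3 * y$3 + x$4 * y$4"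

definition H2 :: "(real ^ 3) set" where
  "H2 = {x. lor3 x x = -1 \<and> x$1 > 0}"

definition proj3 :: "real ^ 4 \<Rightarrow> real ^ 3" where
  "proj3 x = vector [x$1, x$2, x$3]"

definition horiz :: "real ^ 4 \<Rightarrow> real ^ 4" where
  "horiz x = vector [x$1, x$2, x$3, 0]"

definition dx :: "(complex \<Rightarrow> 'b::real_normed_vector) \<Rightarrow> complex \<Rightarrow> 'b" where
  "dx f z = frechet_derivative f (at z) 1"

definition dy :: "(complex \<Rightarrow> 'b::real_normed_vector) \<Rightarrow> complex \<Rightarrow> 'b" where
  "dy f z = frechet_derivative f (at z) \<i>"

fun Ck :: "nat \<Rightarrow> complex set \<Rightarrow> (complex \<Rightarrow> 'b::real_normed_vector) \<Rightarrow> bool" where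
  "Ck 0 U f = continuous_on U f"
| "Ck (Suc k) U f = ((\<forall>z\<in>U. f differentiable (at z)) \<and> Ck k U (dx f) \<and> Ck k U (dy f))"

definition smooth_on :: "complex set \<Rightarrow> (complex \<Rightarrow> 'b::real_normed_vector) \<Rightarrow> bool" where
  "smooth_on U f \<longleftrightarrow> (\<forall>k. Ck k U f)"

definition cvec :: "real ^ 'n \<Rightarrow> complex ^ 'n" where
  "cvec v = (\<chi> i. complex_of_real (v$i))"

definition dz :: "(complex \<Rightarrow> real ^ 'n) \<Rightarrow> complex \<Rightarrow> complex ^ 'n" where
  "dz f z = (1/2) *s (cvec (dx f z) - \<i> *s cvec (dy f z))"

definition dz_real :: "(complex \<Rightarrow> real) \<Rightarrow> complex \<Rightarrow> complex" where
  "dz_real f z = (complex_of_real (dx f z) - \<i> * complex_of_real (dy f z)) / 2"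

definition laplacian :: "(complex \<Rightarrow> 'b::real_normed_vector) \<Rightarrow> complex \<Rightarrow> 'b" where
  "laplacian f z = dx (dx f) z + dy (dy f) z"

text \<open>Conformal factor lambda (metric lambda |dz|^2).\<close>
definition conf_factor :: "(complex \<Rightarrow> real ^ 4) \<Rightarrow> complex \<Rightarrow> real" where
  "conf_factor \<psi> z = lor4 (dx \<psi> z) (dx \<psi> z)"

definition conformal_immersion_H2R :: "complex set \<Rightarrow> (complex \<Rightarrow> real ^ 4) \<Rightarrow> bool" where
  "conformal_immersion_H2R U \<psi> \<longleftrightarrow>
     smooth_on U \<psi> \<and>
     (\<forall>z\<in>U. proj3 (\<psi> z) \<in> H2 \<and>
             lor4 (dz \<psi> z) (dz \<psi> z) = 0 \<and>
             conf_factor \<psi> z > 0)"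

definition unit_normal :: "complex set \<Rightarrow> (complex \<Rightarrow> real ^ 4) \<Rightarrow> (complex \<Rightarrow> real ^ 4) \<Rightarrow> bool" where
  "unit_normal U \<psi> \<eta> \<longleftrightarrow>
     smooth_on U \<eta> \<and>
     (\<forall>z\<in>U. lor4 (\<eta> z) (\<eta> z) = 1 \<and>
             lor4 (\<eta> z) (dx \<psi> z) = 0 \<and>
             lor4 (\<eta> z) (dy \<psi> z) = 0 \<and>
             lor4 (\<eta> z) (horiz (\<psi> z)) = 0)"

text \<open>Mean curvature: Delta psi has normal component 2 lambda H eta.\<close>
definition mean_curv :: "(complex \<Rightarrow> real ^ 4) \<Rightarrow> (complex \<Rightarrow> real ^ 4) \<Rightarrow> complex \<Rightarrow> real" where
  "mean_curv \<psi> \<eta> z = lor4 (laplacian \<psi> z) (\<eta> z) / (2 * conf_factor \<psi> z)"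

definition hopf :: "(complex \<Rightarrow> real ^ 4) \<Rightarrow> (complex \<Rightarrow> real ^ 4) \<Rightarrow> complex \<Rightarrow> complex" where
  "hopf \<psi> \<eta> z = - lor4 (dz \<psi> z) (dz \<eta> z)"

definition height :: "(complex \<Rightarrow> real ^ 4) \<Rightarrow> complex \<Rightarrow> real" where
  "height \<psi> z = \<psi> z $ 4"

definition AR_diff :: "(complex \<Rightarrow> real ^ 4) \<Rightarrow> (complex \<Rightarrow> real ^ 4) \<Rightarrow> complex \<Rightarrow> complex" where
  "AR_diff \<psi> \<eta> z = 2 * complex_of_real (mean_curv \<psi> \<eta> z) * hopf \<psi> \<eta> z
                      + (dz_real (height \<psi>) z)^2"

text \<open>Hyperbolic Gauss map: (G,1) = (eta + N)/u, u = last coordinate of eta.\<close>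
definition hyp_gauss :: "(complex \<Rightarrow> real ^ 4) \<Rightarrow> (complex \<Rightarrow> real ^ 4) \<Rightarrow> complex \<Rightarrow> real ^ 3" where
  "hyp_gauss \<psi> \<eta> z = (1 / (\<eta> z $ 4)) *\<^sub>R (proj3 (\<eta> z) + proj3 (\<psi> z))"

text \<open>Harmonic map into H^2: smooth, H^2-valued, and vanishing tension field,
  i.e. the component of the Laplacian tangent to H^2 vanishes.\<close>
definition harmonic_H2 :: "complex set \<Rightarrow> (complex \<Rightarrow> real ^ 3) \<Rightarrow> bool" where
  "harmonic_H2 U G \<longleftrightarrow>
     smooth_on U G \<and>
     (\<forall>z\<in>U. G z \<in> H2 \<and>
        laplacian G z + lor3 (laplacian G z) (G z) *\<^sub>R G z = 0)"

end

theory Submission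
  imports Defs
begin

lemma fd_cong:
  assumes "open U" "z \<in> U" "\<And>w. w \<in> U \<Longrightarrow> f w = g w"
  shows "frechet_derivative f (at z) = frechet_derivative g (at z)"
proof -
  have "(f has_derivative f') (at z) \<longleftrightarrow> (g has_derivative f') (at z)" for f'
  proof
    assume "(f has_derivative f') (at z)"
    then show "(g has_derivative f') (at z)"
      by (rule has_derivative_transform_within_open[OF _ assms(1,2)]) (rule assms(3))
  next
    assume "(g has_derivative f') (at z)"
    then show "(f has_derivative f') (at z)"
      by (rule has_derivative_transform_within_open[OF _ assms(1,2)]) (rule assms(3)[symmetric])
  qed
  thus ?thesis unfolding frechet_derivative_def by simp
qed

lemma diff_cong:
  assumes "open U" "z \<in> U" "\<And>w. w \<in> U \<Longrightarrow> f w = g w" "f differentiable (at z)"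
  shows "g differentiable (at z)"
proof -
  obtain f' where "(f has_derivative f') (at z)" using assms(4) unfolding differentiable_def by blast
  then have "(g has_derivative f') (at z)"
    by (rule has_derivative_transform_within_open[OF _ assms(1,2)]) (rule assms(3))
  then show ?thesis unfolding differentiable_def by blast
qed

lemma dx_cong:
  assumes "open U" "z \<in> U" "\<And>w. w \<in> U \<Longrightarrow> f w = g w"
  shows "dx f z = dx g z" "dy f z = dy g z"
  using fd_cong[OF assms] by (auto simp: dx_def dy_def)

lemma Ck_cong:
  assumes "open U" "\<And>w. w \<in> U \<Longrightarrow> f w = g w"
  shows "Ck k U f = Ck k U g"
  using assms(2)
proof (induction k arbitrary: f g)
  case 0
  have "continuous_on U f = continuous_on U g" by (rule continuous_on_cong) (auto simp: 0)
  then show ?case by simp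
next
  case (Suc k)
  have d: "(\<forall>z\<in>U. f differentiable (at z)) = (\<forall>z\<in>U. g differentiable (at z))"
    using diff_cong[OF assms(1), of _ f g] diff_cong[OF assms(1), of _ g f] Suc.prems by metis
  have "Ck k U (dx f) = Ck k U (dx g)"
    by (rule Suc.IH) (use dx_cong[OF assms(1)] Suc.prems in blast)
  moreover have "Ck k U (dy f) = Ck k U (dy g)"
    by (rule Suc.IH) (use dx_cong[OF assms(1)] Suc.prems in blast)
  ultimately show ?case using d by simp
qed
lemma Ck_mono: "Ck (Suc k) U f \<Longrightarrow> Ck k U f"
proof (induction k arbitrary: f)
  case 0
  from 0 have "\<forall>z\<in>U. f differentiable (at z)" by (simp only: Ck.simps) blast
  then have "\<forall>z\<in>U. isCont f z" using differentiable_imp_continuous_within by blast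
  then show ?case using continuous_at_imp_continuous_on by simp
next
  case (Suc k)
  from Suc.prems have "Ck (Suc k) U (dx f)" "Ck (Suc k) U (dy f)" "\<forall>z\<in>U. f differentiable (at z)"
    by (simp_all only: Ck.simps) blast+
  then have "Ck k U (dx f)" "Ck k U (dy f)" using Suc.IH by blast+
  then show ?case using \<open>\<forall>z\<in>U. f differentiable (at z)\<close> by (simp only: Ck.simps)
qed

lemma Ck_le: "m \<le> k \<Longrightarrow> Ck k U f \<Longrightarrow> Ck m U f"
proof (induction k rule: dec_induct)
  case base
  then show ?case by (simp del: Ck.simps)
next
  case (step n)
  then show ?case using Ck_mono[of n U f] by blast
qed

lemma dxy_of_has:
  assumes "(f has_derivative f') (at z)"
  shows "dx f z = f' 1" "dy f z = f' \<i>"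
  using frechet_derivative_at[OF assms] by (auto simp: dx_def dy_def)

lemma Ck_SucD:
  assumes "Ck (Suc k) U f"
  shows "\<forall>z\<in>U. f differentiable (at z)" "Ck k U (dx f)" "Ck k U (dy f)"
  using assms by (simp_all only: Ck.simps) blast+

lemma Ck_SucI:
  assumes "\<forall>z\<in>U. f differentiable (at z)" "Ck k U (dx f)" "Ck k U (dy f)"
  shows "Ck (Suc k) U f"
  using assms by (simp only: Ck.simps)

lemma smooth_diff: "smooth_on U f \<Longrightarrow> z \<in> U \<Longrightarrow> f differentiable (at z)"
  unfolding smooth_on_def using Ck_SucD(1) by blast

lemma smooth_dx: "smooth_on U f \<Longrightarrow> smooth_on U (dx f)"
  unfolding smooth_on_def using Ck_SucD(2) by blast

lemma smooth_dy: "smooth_on U f \<Longrightarrow> smooth_on U (dy f)"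
  unfolding smooth_on_def using Ck_SucD(3) by blast

lemma smooth_cont: "smooth_on U f \<Longrightarrow> continuous_on U f"
  unfolding smooth_on_def by (metis Ck.simps(1))

lemma Ck_transfer:
  assumes "open U" "Ck k U g" "\<And>w. w \<in> U \<Longrightarrow> f w = g w"
  shows "Ck k U f"
  using Ck_cong[OF assms(1), of f g k] assms(2,3) by blast

lemma Ck_const: "Ck k U (\<lambda>z. c)"
proof (induction k arbitrary: c)
  case 0
  then show ?case by simp
next
  case (Suc k)
  have "dx (\<lambda>z. c) = (\<lambda>z. 0)" "dy (\<lambda>z. c) = (\<lambda>z. 0)"
    using dxy_of_has[OF has_derivative_const] by (auto simp: fun_eq_iff)
  moreover have "\<forall>z\<in>U. (\<lambda>z. c) differentiable (at z)" by simp
  ultimately show ?case using Suc.IH[of 0] by (intro Ck_SucI) simp_all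
qed

lemma Ck_add:
  assumes "open U"
  shows "Ck k U f \<Longrightarrow> Ck k U g \<Longrightarrow> Ck k U (\<lambda>z. f z + g z)"
proof (induction k arbitrary: f g)
  case 0
  then show ?case by (simp add: continuous_on_add)
next
  case (Suc k)
  note f = Ck_SucD[OF Suc.prems(1)] and g = Ck_SucD[OF Suc.prems(2)]
  have D: "dx (\<lambda>z. f z + g z) z = dx f z + dx g z \<and> dy (\<lambda>z. f z + g z) z = dy f z + dy g z"
    if "z \<in> U" for z
  proof -
    have "(f has_derivative frechet_derivative f (at z)) (at z)"
         "(g has_derivative frechet_derivative g (at z)) (at z)"
      using f(1) g(1) that frechet_derivative_works by blast+
    from dxy_of_has[OF has_derivative_add[OF this]] show ?thesis
      by (simp add: dx_def dy_def)
  qed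
  have "Ck k U (dx (\<lambda>z. f z + g z))"
    by (rule Ck_transfer[OF assms Suc.IH[OF f(2) g(2)]]) (use D in blast)
  moreover have "Ck k U (dy (\<lambda>z. f z + g z))"
    by (rule Ck_transfer[OF assms Suc.IH[OF f(3) g(3)]]) (use D in blast)
  moreover have "\<forall>z\<in>U. (\<lambda>z. f z + g z) differentiable (at z)"
    using f(1) g(1) by (auto intro: differentiable_add)
  ultimately show ?case by (intro Ck_SucI)
qed

lemma Ck_linear:
  assumes "open U" "bounded_linear L"
  shows "Ck k U f \<Longrightarrow> Ck k U (\<lambda>z. L (f z))"
proof (induction k arbitrary: f)
  case 0
  then have "continuous_on U f" by (simp only: Ck.simps)
  then show ?case by (simp only: Ck.simps) (rule bounded_linear.continuous_on[OF assms(2)])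
next
  case (Suc k)
  note f = Ck_SucD[OF Suc.prems(1)]
  have H: "((\<lambda>z. L (f z)) has_derivative (\<lambda>h. L (frechet_derivative f (at z) h))) (at z)"
    if "z \<in> U" for z
  proof -
    have "(f has_derivative frechet_derivative f (at z)) (at z)"
      using f(1) that frechet_derivative_works by blast
    from bounded_linear.has_derivative[OF assms(2) this] show ?thesis .
  qed
  have D: "dx (\<lambda>z. L (f z)) z = L (dx f z) \<and> dy (\<lambda>z. L (f z)) z = L (dy f z)"
    if "z \<in> U" for z
    using dxy_of_has[OF H[OF that]] by (simp add: dx_def dy_def)
  have "Ck k U (dx (\<lambda>z. L (f z)))"
    by (rule Ck_transfer[OF assms(1) Suc.IH[OF f(2)]]) (use D in blast)
  moreover have "Ck k U (dy (\<lambda>z. L (f z)))"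
    by (rule Ck_transfer[OF assms(1) Suc.IH[OF f(3)]]) (use D in blast)
  moreover have "\<forall>z\<in>U. (\<lambda>z. L (f z)) differentiable (at z)"
    using H unfolding differentiable_def by blast
  ultimately show ?case by (intro Ck_SucI)
qed

lemma Ck_bilinear:
  assumes "open U" "bounded_bilinear P"
  shows "Ck k U f \<Longrightarrow> Ck k U g \<Longrightarrow> Ck k U (\<lambda>z. P (f z) (g z))"
proof (induction k arbitrary: f g)
  case 0
  then have "continuous_on U f" "continuous_on U g" by (simp_all only: Ck.simps)
  then show ?case by (simp only: Ck.simps) (rule bounded_bilinear.continuous_on[OF assms(2)])
next
  case (Suc k)
  note f = Ck_SucD[OF Suc.prems(1)] and g = Ck_SucD[OF Suc.prems(2)]
  have H: "((\<lambda>z. P (f z) (g z)) has_derivative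
     (\<lambda>h. P (f z) (frechet_derivative g (at z) h) + P (frechet_derivative f (at z) h) (g z))) (at z)"
    if "z \<in> U" for z
  proof -
    have "(f has_derivative frechet_derivative f (at z)) (at z)"
         "(g has_derivative frechet_derivative g (at z)) (at z)"
      using f(1) g(1) that frechet_derivative_works by blast+
    from bounded_bilinear.FDERIV[OF assms(2) this] show ?thesis .
  qed
  have D: "dx (\<lambda>z. P (f z) (g z)) z = P (f z) (dx g z) + P (dx f z) (g z) \<and>
           dy (\<lambda>z. P (f z) (g z)) z = P (f z) (dy g z) + P (dy f z) (g z)"
    if "z \<in> U" for z
    using dxy_of_has[OF H[OF that]] by (simp add: dx_def dy_def)
  have fk: "Ck k U f" and gk: "Ck k U g" using Ck_mono[OF Suc.prems(1)] Ck_mono[OF Suc.prems(2)] .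
  have "Ck k U (\<lambda>z. P (f z) (dx g z) + P (dx f z) (g z))"
    by (intro Ck_add[OF assms(1)] Suc.IH[OF fk g(2)] Suc.IH[OF f(2) gk])
  then have "Ck k U (dx (\<lambda>z. P (f z) (g z)))"
    by (rule Ck_transfer[OF assms(1)]) (use D in blast)
  moreover have "Ck k U (\<lambda>z. P (f z) (dy g z) + P (dy f z) (g z))"
    by (intro Ck_add[OF assms(1)] Suc.IH[OF fk g(3)] Suc.IH[OF f(3) gk])
  then have "Ck k U (dy (\<lambda>z. P (f z) (g z)))"
    by (rule Ck_transfer[OF assms(1)]) (use D in blast)
  moreover have "\<forall>z\<in>U. (\<lambda>z. P (f z) (g z)) differentiable (at z)"
    using H unfolding differentiable_def by blast
  ultimately show ?case by (intro Ck_SucI)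
qed

lemma Ck_inverse:
  fixes f :: "complex \<Rightarrow> real"
  assumes "open U"
  shows "Ck k U f \<Longrightarrow> \<forall>z\<in>U. f z \<noteq> 0 \<Longrightarrow> Ck k U (\<lambda>z. inverse (f z))"
proof (induction k arbitrary: f)
  case 0
  then have "continuous_on U f" by (simp_all only: Ck.simps)
  then show ?case using 0(2) by (simp only: Ck.simps) (rule continuous_on_inverse)
next
  case (Suc k)
  note f = Ck_SucD[OF Suc.prems(1)]
  have H: "((\<lambda>z. inverse (f z)) has_derivative
     (\<lambda>h. - (inverse (f z) * frechet_derivative f (at z) h * inverse (f z)))) (at z)"
    if "z \<in> U" for z
  proof -
    have "(f has_derivative frechet_derivative f (at z)) (at z)"
      using f(1) that frechet_derivative_works by blast
    from Deriv.has_derivative_inverse[OF _ this] Suc.prems(2) that show ?thesis by blast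
  qed
  have D: "dx (\<lambda>z. inverse (f z)) z = - (inverse (f z) * inverse (f z)) * dx f z \<and>
           dy (\<lambda>z. inverse (f z)) z = - (inverse (f z) * inverse (f z)) * dy f z"
    if "z \<in> U" for z
    using dxy_of_has[OF H[OF that]] by (simp add: dx_def dy_def)
  have fk: "Ck k U f" using Ck_mono[OF Suc.prems(1)] .
  have ik: "Ck k U (\<lambda>z. inverse (f z))" using Suc.IH[OF fk Suc.prems(2)] .
  have ii: "Ck k U (\<lambda>z. - (inverse (f z) * inverse (f z)))"
    using Ck_linear[OF assms(1) bounded_linear_minus[OF bounded_linear_ident]
        Ck_bilinear[OF assms(1) bounded_bilinear_mult ik ik]] by simp
  have "Ck k U (\<lambda>z. - (inverse (f z) * inverse (f z)) * dx f z)"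
    by (rule Ck_bilinear[OF assms(1) bounded_bilinear_mult ii f(2)])
  then have "Ck k U (dx (\<lambda>z. inverse (f z)))"
    by (rule Ck_transfer[OF assms(1)]) (use D in blast)
  moreover have "Ck k U (\<lambda>z. - (inverse (f z) * inverse (f z)) * dy f z)"
    by (rule Ck_bilinear[OF assms(1) bounded_bilinear_mult ii f(3)])
  then have "Ck k U (dy (\<lambda>z. inverse (f z)))"
    by (rule Ck_transfer[OF assms(1)]) (use D in blast)
  moreover have "\<forall>z\<in>U. (\<lambda>z. inverse (f z)) differentiable (at z)"
    using H unfolding differentiable_def by blast
  ultimately show ?case by (intro Ck_SucI)
qed

lemma path_deriv:
  fixes g :: "complex \<Rightarrow> real"
  assumes "g differentiable (at (a + of_real s * v))"
  shows "((\<lambda>t. g (a + of_real t * v)) has_real_derivative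
           frechet_derivative g (at (a + of_real s * v)) v) (at s)"
proof -
  let ?g' = "frechet_derivative g (at (a + of_real s * v))"
  have g: "(g has_derivative ?g') (at (a + of_real s * v))"
    using assms frechet_derivative_works by blast
  have p: "((\<lambda>t. a + of_real t * v) has_derivative (\<lambda>h. of_real h * v)) (at s)"
    by (auto intro!: derivative_eq_intros)
  have c: "((\<lambda>t. g (a + of_real t * v)) has_derivative (\<lambda>h. ?g' (of_real h * v))) (at s)"
    using has_derivative_compose[OF p g] .
  have bl: "bounded_linear ?g'" using has_derivative_bounded_linear[OF g] .
  have "(\<lambda>h. ?g' (of_real h * v)) = (\<lambda>h. ?g' v * h)"
  proof
    fix h :: real
    have "?g' (of_real h * v) = ?g' (h *\<^sub>R v)" by (simp add: scaleR_conv_of_real)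
    also have "\<dots> = h *\<^sub>R ?g' v" by (rule linear_scale[OF bounded_linear.linear[OF bl]])
    finally show "?g' (of_real h * v) = ?g' v * h" by simp
  qed
  with c show ?thesis unfolding has_field_derivative_def by simp
qed

lemma schwarz_real:
  fixes g :: "complex \<Rightarrow> real"
  assumes U: "open U" and C: "Ck 2 U g" and z: "z \<in> U"
  shows "dy (dx g) z = dx (dy g) z"
proof -
  have C1: "\<forall>w\<in>U. g differentiable (at w)" "Ck 1 U (dx g)" "Ck 1 U (dy g)"
    using Ck_SucD[of 1 U g] C by (simp_all add: numeral_2_eq_2)
  have dgx: "\<forall>w\<in>U. dx g differentiable (at w)" and Acont: "continuous_on U (dy (dx g))"
    using Ck_SucD[OF C1(2)[unfolded One_nat_def]] by simp_all
  have dgy: "\<forall>w\<in>U. dy g differentiable (at w)" and Bcont: "continuous_on U (dx (dy g))"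
    using Ck_SucD[OF C1(3)[unfolded One_nat_def]] by simp_all
  define A where "A = dy (dx g)"
  define B where "B = dx (dy g)"
  have Ac: "isCont A z" using Acont U z continuous_on_eq_continuous_at A_def by blast
  have Bc: "isCont B z" using Bcont U z continuous_on_eq_continuous_at B_def by blast
  obtain r where r: "r > 0" "ball z r \<subseteq> U" using U z open_contains_ball by blast
  have key: "\<bar>A z - B z\<bar> < 2 * e" if e: "e > 0" for e
  proof -
    obtain d1 where d1: "d1 > 0" "\<And>w. dist w z < d1 \<Longrightarrow> dist (A w) (A z) < e"
      using Ac e unfolding continuous_at_eps_delta by (metis dist_commute)
    obtain d2 where d2: "d2 > 0" "\<And>w. dist w z < d2 \<Longrightarrow> dist (B w) (B z) < e"
      using Bc e unfolding continuous_at_eps_delta by (metis dist_commute)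
    define t where "t = min r (min d1 d2) / 3"
    have t: "t > 0" using r d1 d2 by (simp add: t_def)
    have near: "dist (z + of_real s + \<i> * of_real \<tau>) z < min r (min d1 d2)"
      if "0 \<le> s" "s \<le> t" "0 \<le> \<tau>" "\<tau> \<le> t" for s \<tau>
    proof -
      have "dist (z + of_real s + \<i> * of_real \<tau>) z = norm (complex_of_real s + \<i> * of_real \<tau>)"
        by (simp add: dist_norm)
      also have "\<dots> \<le> norm (complex_of_real s) + norm (\<i> * complex_of_real \<tau>)"
        by (rule norm_triangle_ineq)
      also have "\<dots> = s + \<tau>" using that by (simp add: norm_mult)
      also have "\<dots> < min r (min d1 d2)" using that t unfolding t_def by linarith
      finally show ?thesis .
    qed
    have inU: "z + of_real s + \<i> * of_real \<tau> \<in> U"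
      if "0 \<le> s" "s \<le> t" "0 \<le> \<tau>" "\<tau> \<le> t" for s \<tau>
      using near[OF that] r(2) by (auto simp: dist_commute)
    define D where "D = g (z + of_real t + \<i> * of_real t) - g (z + of_real t) - g (z + \<i> * of_real t) + g z"
    \<comment> \<open>first way: x then y\<close>
    have "\<exists>\<sigma>. 0 < \<sigma> \<and> \<sigma> < t \<and> (\<lambda>s. g ((z + \<i> * of_real t) + of_real s * 1) - g (z + of_real s * 1)) t
             - (\<lambda>s. g ((z + \<i> * of_real t) + of_real s * 1) - g (z + of_real s * 1)) 0
          = (t - 0) * (dx g ((z + \<i> * of_real t) + of_real \<sigma> * 1) - dx g (z + of_real \<sigma> * 1))"
    proof (rule MVT2[OF t])
      fix s assume s: "0 \<le> s" "s \<le> t"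
      have i1: "(z + \<i> * of_real t) + of_real s * 1 \<in> U" using inU[OF s, of t] t by (simp add: algebra_simps)
      have i2: "z + of_real s * 1 \<in> U" using inU[OF s, of 0] t by simp
      show "((\<lambda>s. g ((z + \<i> * of_real t) + of_real s * 1) - g (z + of_real s * 1)) has_real_derivative
             (dx g ((z + \<i> * of_real t) + of_real s * 1) - dx g (z + of_real s * 1))) (at s)"
        unfolding dx_def using C1(1) i1 i2 by (intro DERIV_diff path_deriv) auto
    qed
    then obtain \<sigma> where \<sigma>: "0 < \<sigma>" "\<sigma> < t"
      "D = t * (dx g (z + of_real \<sigma> + \<i> * of_real t) - dx g (z + of_real \<sigma>))"
      unfolding D_def by (auto simp: algebra_simps)
    have "\<exists>\<tau>. 0 < \<tau> \<and> \<tau> < t \<and> dx g ((z + of_real \<sigma>) + of_real t * \<i>) - dx g ((z + of_real \<sigma>) + of_real 0 * \<i>)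
          = (t - 0) * A ((z + of_real \<sigma>) + of_real \<tau> * \<i>)"
    proof (rule MVT2[OF t])
      fix s assume s: "0 \<le> s" "s \<le> t"
      have i1: "(z + of_real \<sigma>) + of_real s * \<i> \<in> U" using inU[OF _ _ s, of \<sigma>] \<sigma> by (simp add: algebra_simps)
      show "((\<lambda>s. dx g ((z + of_real \<sigma>) + of_real s * \<i>)) has_real_derivative A ((z + of_real \<sigma>) + of_real s * \<i>)) (at s)"
        unfolding A_def dy_def using dgx i1 by (intro path_deriv) auto
    qed
    then obtain \<tau> where \<tau>: "0 < \<tau>" "\<tau> < t" "D = t * (t * A (z + of_real \<sigma> + \<i> * of_real \<tau>))"
      using \<sigma>(3) by (auto simp: algebra_simps)
    \<comment> \<open>second way: y then x\<close>
    have "\<exists>\<tau>. 0 < \<tau> \<and> \<tau> < t \<and> (\<lambda>s. g ((z + of_real t) + of_real s * \<i>) - g (z + of_real s * \<i>)) t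
             - (\<lambda>s. g ((z + of_real t) + of_real s * \<i>) - g (z + of_real s * \<i>)) 0
          = (t - 0) * (dy g ((z + of_real t) + of_real \<tau> * \<i>) - dy g (z + of_real \<tau> * \<i>))"
    proof (rule MVT2[OF t])
      fix s assume s: "0 \<le> s" "s \<le> t"
      have i1: "(z + of_real t) + of_real s * \<i> \<in> U" using inU[OF _ _ s, of t] t by (simp add: algebra_simps)
      have i2: "z + of_real s * \<i> \<in> U" using inU[OF _ _ s, of 0] t by (simp add: algebra_simps)
      show "((\<lambda>s. g ((z + of_real t) + of_real s * \<i>) - g (z + of_real s * \<i>)) has_real_derivative
             (dy g ((z + of_real t) + of_real s * \<i>) - dy g (z + of_real s * \<i>))) (at s)"
        unfolding dy_def using C1(1) i1 i2 by (intro DERIV_diff path_deriv) auto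
    qed
    then obtain \<tau>' where \<tau>': "0 < \<tau>'" "\<tau>' < t"
      "D = t * (dy g (z + of_real t + \<i> * of_real \<tau>') - dy g (z + \<i> * of_real \<tau>'))"
      unfolding D_def by (auto simp: algebra_simps)
    have "\<exists>\<sigma>. 0 < \<sigma> \<and> \<sigma> < t \<and> dy g ((z + \<i> * of_real \<tau>') + of_real t * 1) - dy g ((z + \<i> * of_real \<tau>') + of_real 0 * 1)
          = (t - 0) * B ((z + \<i> * of_real \<tau>') + of_real \<sigma> * 1)"
    proof (rule MVT2[OF t])
      fix s assume s: "0 \<le> s" "s \<le> t"
      have i1: "(z + \<i> * of_real \<tau>') + of_real s * 1 \<in> U" using inU[OF s, of \<tau>'] \<tau>' by (simp add: algebra_simps)
      show "((\<lambda>s. dy g ((z + \<i> * of_real \<tau>') + of_real s * 1)) has_real_derivative B ((z + \<i> * of_real \<tau>') + of_real s * 1)) (at s)"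
        unfolding B_def dx_def using dgy i1 by (intro path_deriv) auto
    qed
    then obtain \<sigma>' where \<sigma>': "0 < \<sigma>'" "\<sigma>' < t" "D = t * (t * B (z + of_real \<sigma>' + \<i> * of_real \<tau>'))"
      using \<tau>'(3) by (auto simp: algebra_simps)
    have eq: "A (z + of_real \<sigma> + \<i> * of_real \<tau>) = B (z + of_real \<sigma>' + \<i> * of_real \<tau>')"
      using \<tau>(3) \<sigma>'(3) t by simp
    have "dist (A (z + of_real \<sigma> + \<i> * of_real \<tau>)) (A z) < e"
      using d1(2) near[of \<sigma> \<tau>] \<sigma> \<tau> by simp
    moreover have "dist (B (z + of_real \<sigma>' + \<i> * of_real \<tau>')) (B z) < e"
      using d2(2) near[of \<sigma>' \<tau>'] \<sigma>' \<tau>' by simp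
    ultimately show ?thesis using eq by (simp add: dist_real_def)
  qed
  have "A z = B z"
  proof (rule ccontr)
    assume "A z \<noteq> B z"
    then have "\<bar>A z - B z\<bar> / 4 > 0" by simp
    from key[OF this] show False by simp
  qed
  then show ?thesis by (simp add: A_def B_def)
qed

lemma vector_4 [simp]:
 "(vector [a,b,c,d] ::('a::zero)^4)$1 = a"
 "(vector [a,b,c,d] ::('a::zero)^4)$2 = b"
 "(vector [a,b,c,d] ::('a::zero)^4)$3 = c"
 "(vector [a,b,c,d] ::('a::zero)^4)$4 = d"
  unfolding vector_def by simp_all

lemma vec4_eq_iff: "(a::'a^4) = b \<longleftrightarrow> a$1 = b$1 \<and> a$2 = b$2 \<and> a$3 = b$3 \<and> a$4 = b$4"
  by (simp add: vec_eq_iff forall_4)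

lemma vec3_eq_iff: "(a::'a^3) = b \<longleftrightarrow> a$1 = b$1 \<and> a$2 = b$2 \<and> a$3 = b$3"
  by (simp add: vec_eq_iff forall_3)

lemma proj3_nth [simp]: "proj3 x $ 1 = x $ 1" "proj3 x $ 2 = x $ 2" "proj3 x $ 3 = x $ 3"
  by (simp_all add: proj3_def)

lemma horiz_nth [simp]: "horiz x $ 1 = x $ 1" "horiz x $ 2 = x $ 2" "horiz x $ 3 = x $ 3" "horiz x $ 4 = 0"
  by (simp_all add: horiz_def)

definition e4 :: "real^4" where "e4 = vector [0,0,0,1]"

lemma e4_nth [simp]: "e4 $ 1 = 0" "e4 $ 2 = 0" "e4 $ 3 = 0" "e4 $ 4 = 1"
  by (simp_all add: e4_def)

lemma bounded_linear_proj3: "bounded_linear proj3"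
proof -
  have "linear proj3" by (rule linearI) (simp_all add: vec3_eq_iff)
  then show ?thesis using linear_conv_bounded_linear by blast
qed

lemma bounded_linear_horiz: "bounded_linear horiz"
proof -
  have "linear horiz" by (rule linearI) (simp_all add: vec4_eq_iff)
  then show ?thesis using linear_conv_bounded_linear by blast
qed

lemma horiz_eq: "horiz x = x - (x $ 4) *\<^sub>R e4"
  by (simp add: vec4_eq_iff)

lemma proj3_horiz [simp]: "proj3 (horiz x) = proj3 x"
  by (simp add: vec3_eq_iff)

lemma lor4_sym: "lor4 a b = lor4 b a"
  by (simp add: lor4_def algebra_simps)

lemma lor4_simps [simp]:
  fixes a b c :: "real^4"
  shows "lor4 (a + b) c = lor4 a c + lor4 b c"
    "lor4 a (b + c) = lor4 a b + lor4 a c"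
    "lor4 (a - b) c = lor4 a c - lor4 b c"
    "lor4 a (b - c) = lor4 a b - lor4 a c"
    "lor4 (- a) c = - lor4 a c"
    "lor4 a (- c) = - lor4 a c"
    "lor4 (r *\<^sub>R a) c = r * lor4 a c"
    "lor4 a (r *\<^sub>R c) = r * lor4 a c"
    "lor4 0 c = 0" "lor4 a 0 = 0"
  by (simp_all add: lor4_def algebra_simps)

lemma lor4_e4 [simp]: "lor4 e4 v = v $ 4" "lor4 v e4 = v $ 4"
  by (simp_all add: lor4_def)

lemma lor4_horiz: "lor4 (horiz a) b = lor4 a b - a$4 * b$4" "lor4 b (horiz a) = lor4 b a - a$4 * b$4"
  by (simp_all add: lor4_def)

lemma lor3_proj3: "lor3 (proj3 a) (proj3 b) = lor4 a b - a$4 * b$4"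
  by (simp add: lor3_def lor4_def)

lemma bounded_bilinear_lor4: "bounded_bilinear (lor4 :: real^4 \<Rightarrow> real^4 \<Rightarrow> real)"
proof (rule bounded_bilinear.intro)
  fix a b c :: "real^4" and r :: real
  show "lor4 (a + b) c = lor4 a c + lor4 b c" "lor4 a (b + c) = lor4 a b + lor4 a c"
    "lor4 (r *\<^sub>R a) b = r *\<^sub>R lor4 a b" "lor4 a (r *\<^sub>R b) = r *\<^sub>R lor4 a b" by simp_all
next
  have t: "\<bar>a $ i * b $ i\<bar> \<le> norm a * norm b" for a b :: "real^4" and i
    unfolding abs_mult by (intro mult_mono component_le_norm_cart) auto
  have "norm (lor4 a b) \<le> norm a * norm b * 4" for a b :: "real^4"
    using t[where i=1 and a=a and b=b] t[where i=2 and a=a and b=b] t[where i=3 and a=a and b=b] t[where i=4 and a=a and b=b] unfolding lor4_def real_norm_def by linarith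
  then show "\<exists>K. \<forall>a b. norm (lor4 a b :: real) \<le> norm (a::real^4) * norm (b::real^4) * K" by blast
qed

lemma lor4_cdz:
  fixes a b c d :: "real^4"
  shows "lor4 ((1/2) *s (cvec a - \<i> *s cvec b)) ((1/2) *s (cvec c - \<i> *s cvec d))
       = Complex ((lor4 a c - lor4 b d) / 4) (- (lor4 a d + lor4 b c) / 4)"
  by (simp add: lor4_def cvec_def complex_eq_iff algebra_simps)

lemma lor3_cdz:
  fixes a b :: "real^3"
  shows "lor3 ((1/2) *s (cvec a - \<i> *s cvec b)) ((1/2) *s (cvec a - \<i> *s cvec b))
       = Complex ((lor3 a a - lor3 b b) / 4) (- (2 * lor3 a b) / 4)"
  by (simp add: lor3_def cvec_def complex_eq_iff algebra_simps)

lemma diff_bilinear: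
  assumes "bounded_bilinear P" "f differentiable (at z)" "g differentiable (at z)"
  shows "(\<lambda>w. P (f w) (g w)) differentiable (at z)"
  using bounded_bilinear.FDERIV[OF assms(1)] assms(2,3) unfolding differentiable_def by blast

lemma dxy_bilinear:
  assumes "bounded_bilinear P" "f differentiable (at z)" "g differentiable (at z)"
  shows "dx (\<lambda>w. P (f w) (g w)) z = P (f z) (dx g z) + P (dx f z) (g z)"
    "dy (\<lambda>w. P (f w) (g w)) z = P (f z) (dy g z) + P (dy f z) (g z)"
proof -
  have "(f has_derivative frechet_derivative f (at z)) (at z)"
       "(g has_derivative frechet_derivative g (at z)) (at z)"
    using assms(2,3) frechet_derivative_works by blast+
  from dxy_of_has[OF bounded_bilinear.FDERIV[OF assms(1) this]]
  show "dx (\<lambda>w. P (f w) (g w)) z = P (f z) (dx g z) + P (dx f z) (g z)"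
    "dy (\<lambda>w. P (f w) (g w)) z = P (f z) (dy g z) + P (dy f z) (g z)"
    by (simp_all add: dx_def dy_def)
qed

lemma diff_linear:
  assumes "bounded_linear L" "f differentiable (at z)"
  shows "(\<lambda>w. L (f w)) differentiable (at z)"
  using bounded_linear.has_derivative[OF assms(1)] assms(2) unfolding differentiable_def by blast

lemma dxy_linear:
  assumes "bounded_linear L" "f differentiable (at z)"
  shows "dx (\<lambda>w. L (f w)) z = L (dx f z)" "dy (\<lambda>w. L (f w)) z = L (dy f z)"
proof -
  have "(f has_derivative frechet_derivative f (at z)) (at z)"
    using assms(2) frechet_derivative_works by blast
  from dxy_of_has[OF bounded_linear.has_derivative[OF assms(1) this]]
  show "dx (\<lambda>w. L (f w)) z = L (dx f z)" "dy (\<lambda>w. L (f w)) z = L (dy f z)"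
    by (simp_all add: dx_def dy_def)
qed

lemma dxy_add:
  assumes "f differentiable (at z)" "g differentiable (at z)"
  shows "dx (\<lambda>w. f w + g w) z = dx f z + dx g z" "dy (\<lambda>w. f w + g w) z = dy f z + dy g z"
proof -
  have "(f has_derivative frechet_derivative f (at z)) (at z)"
       "(g has_derivative frechet_derivative g (at z)) (at z)"
    using assms frechet_derivative_works by blast+
  from dxy_of_has[OF has_derivative_add[OF this]]
  show "dx (\<lambda>w. f w + g w) z = dx f z + dx g z" "dy (\<lambda>w. f w + g w) z = dy f z + dy g z"
    by (simp_all add: dx_def dy_def)
qed

lemma dxy_const_on:
  assumes "open U" "z \<in> U" "\<And>w. w \<in> U \<Longrightarrow> F w = c"
  shows "dx F z = 0" "dy F z = 0"
proof -
  have "dx F z = dx (\<lambda>w. c) z" "dy F z = dy (\<lambda>w. c) z" using dx_cong[OF assms] by auto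
  moreover have "dx (\<lambda>w. c) z = 0" "dy (\<lambda>w. c) z = 0" using dxy_of_has[OF has_derivative_const] by auto
  ultimately show "dx F z = 0" "dy F z = 0" by auto
qed

lemma schwarz:
  fixes f :: "complex \<Rightarrow> real^'n"
  assumes U: "open U" and C: "Ck 2 U f" and z: "z \<in> U"
  shows "dy (dx f) z = dx (dy f) z"
proof -
  have C1: "\<forall>w\<in>U. f differentiable (at w)" "Ck 1 U (dx f)" "Ck 1 U (dy f)"
    using Ck_SucD[of 1 U f] C by (simp_all add: numeral_2_eq_2)
  have dgx: "\<forall>w\<in>U. dx f differentiable (at w)"
    using Ck_SucD[OF C1(2)[unfolded One_nat_def]] by simp_all
  have dgy: "\<forall>w\<in>U. dy f differentiable (at w)"
    using Ck_SucD[OF C1(3)[unfolded One_nat_def]] by simp_all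
  show ?thesis
  proof (subst vec_eq_iff, intro allI)
    fix i
    let ?g = "\<lambda>w. f w $ i"
    have Cg: "Ck 2 U ?g" by (rule Ck_linear[OF U bounded_linear_vec_nth C])
    have e1: "dx ?g w = dx f w $ i" "dy ?g w = dy f w $ i" if "w \<in> U" for w
      using dxy_linear[OF bounded_linear_vec_nth, of f w i] C1(1) that by auto
    have "dy (dx ?g) z = dy (\<lambda>w. dx f w $ i) z" using dx_cong[OF U z, of "dx ?g"] e1 by auto
    also have "\<dots> = dy (dx f) z $ i" using dxy_linear[OF bounded_linear_vec_nth, of "dx f" z i] dgx z by auto
    finally have 1: "dy (dx ?g) z = dy (dx f) z $ i" .
    have "dx (dy ?g) z = dx (\<lambda>w. dy f w $ i) z" using dx_cong[OF U z, of "dy ?g"] e1 by auto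
    also have "\<dots> = dx (dy f) z $ i" using dxy_linear[OF bounded_linear_vec_nth, of "dy f" z i] dgy z by auto
    finally have 2: "dx (dy ?g) z = dx (dy f) z $ i" .
    show "dy (dx f) z $ i = dx (dy f) z $ i" using schwarz_real[OF U Cg z] 1 2 by simp
  qed
qed

lemma frame:
  fixes X Y E M v :: "real^4"
  assumes l: "lam > 0" and XX: "lor4 X X = lam" and YY: "lor4 Y Y = lam" and XY: "lor4 X Y = 0"
    and EE: "lor4 E E = 1" and MM: "lor4 M M = -1" and EX: "lor4 E X = 0" and EY: "lor4 E Y = 0"
    and EM: "lor4 E M = 0" and MX: "lor4 M X = 0" and MY: "lor4 M Y = 0"
  shows "v = (lor4 v X / lam) *\<^sub>R X + (lor4 v Y / lam) *\<^sub>R Y + lor4 v E *\<^sub>R E - lor4 v M *\<^sub>R M"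
proof -
  define \<Phi> where "\<Phi> = (\<lambda>c::real^4. c$1 *\<^sub>R X + c$2 *\<^sub>R Y + c$3 *\<^sub>R E + c$4 *\<^sub>R M)"
  have sym: "lor4 Y X = 0" "lor4 X E = 0" "lor4 Y E = 0" "lor4 M E = 0" "lor4 X M = 0" "lor4 Y M = 0"
    using XY EX EY EM MX MY lor4_sym by metis+
  have ipX: "lor4 (\<Phi> c) X = c$1 * lam" and ipY: "lor4 (\<Phi> c) Y = c$2 * lam"
    and ipE: "lor4 (\<Phi> c) E = c$3" and ipM: "lor4 (\<Phi> c) M = - c$4" for c
    unfolding \<Phi>_def using XX YY XY EE MM EX EY EM MX MY sym by simp_all
  have lin: "linear \<Phi>" unfolding \<Phi>_def by (rule linearI) (simp_all add: algebra_simps)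
  have "inj \<Phi>"
  proof (rule injI)
    fix c d assume "\<Phi> c = \<Phi> d"
    then have "lor4 (\<Phi> c) X = lor4 (\<Phi> d) X" "lor4 (\<Phi> c) Y = lor4 (\<Phi> d) Y"
      "lor4 (\<Phi> c) E = lor4 (\<Phi> d) E" "lor4 (\<Phi> c) M = lor4 (\<Phi> d) M" by simp_all
    then show "c = d" unfolding ipX ipY ipE ipM using l by (simp add: vec4_eq_iff)
  qed
  then have "surj \<Phi>" using linear_injective_imp_surjective[OF lin] by blast
  define w where "w = v - ((lor4 v X / lam) *\<^sub>R X + (lor4 v Y / lam) *\<^sub>R Y + lor4 v E *\<^sub>R E - lor4 v M *\<^sub>R M)"
  obtain c where c: "w = \<Phi> c" using \<open>surj \<Phi>\<close> by (metis surjD)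
  have "lor4 w X = 0" "lor4 w Y = 0" "lor4 w E = 0" "lor4 w M = 0"
    unfolding w_def using l XX YY XY EE MM EX EY EM MX MY sym by simp_all
  then have "c = 0" unfolding c ipX ipY ipE ipM using l by (simp add: vec4_eq_iff)
  then have "w = 0" unfolding c \<Phi>_def by simp
  then show ?thesis unfolding w_def by simp
qed

lemma alg_all:
  fixes lam u X4 Y4 L Mm Nn al be :: real
  assumes l: "lam * m = 1" and u: "u * v = 1" and H: "Nn = lam - L" and e: "lam * u^2 = lam - X4^2 - Y4^2"
    and ex4: "ex4 * lam = -(L*X4 + Mm*Y4)" and ey4: "ey4 * lam = -(Mm*X4 + Nn*Y4)"
    and gxX: "gxX * u = lam - L - X4^2" and gxY: "gxY * u = -(Mm + X4*Y4)"
    and gyX: "gyX * u = -(Mm + X4*Y4)" and gyY: "gyY * u = lam - Nn - Y4^2"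
    and gxE: "gxE = -X4 - ex4 * v^2" and gxM: "gxM = - gxE"
    and gyE: "gyE = -Y4 - ey4 * v^2" and gyM: "gyM = - gyE"
  shows "2*u*al + ex4*lam
          - ((gxX*al + gxY*(-be))*m + gxE*L - gxM*(-(lam - X4^2)))
          - 2*((gyX*be + gyY*al)*m + gyE*Mm - gyM*(X4*Y4))
          + ((gxX*(-al) + gxY*be)*m + gxE*Nn - gxM*(-(lam - Y4^2)))
        = X4 * (-(((gxX*gxX + gxY*gxY)*m + gxE*gxE - gxM*gxM) + ((gyX*gyX + gyY*gyY)*m + gyE*gyE - gyM*gyM)))"
    and "2*u*be + ey4*lam
          - 2*((gxX*be + gxY*al)*m + gxE*Mm - gxM*(X4*Y4))
          - ((gyX*(-al) + gyY*be)*m + gyE*Nn - gyM*(-(lam - Y4^2)))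
          + ((gyX*al + gyY*(-be))*m + gyE*L - gyM*(-(lam - X4^2)))
        = Y4 * (-(((gxX*gxX + gxY*gxY)*m + gxE*gxE - gxM*gxM) + ((gyX*gyX + gyY*gyY)*m + gyE*gyE - gyM*gyM)))"
    and "((gxX*gxX + gxY*gxY)*m + gxE*gxE - gxM*gxM) - ((gyX*gyX + gyY*gyY)*m + gyE*gyE - gyM*gyM)
         = -(L - Nn + X4^2 - Y4^2)"
    and "(gxX*gyX + gxY*gyY)*m + gxE*gyE - gxM*gyM = -(Mm + X4*Y4)"
    and "gxX + gyY = u * lam"
  using assms by algebra+

lemma lor4_const_deriv:
  fixes f g :: "complex \<Rightarrow> real^4"
  assumes "open U" "z \<in> U" "f differentiable (at z)" "g differentiable (at z)"
    "\<And>w. w \<in> U \<Longrightarrow> lor4 (f w) (g w) = c"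
  shows "lor4 (f z) (dx g z) + lor4 (dx f z) (g z) = 0"
    "lor4 (f z) (dy g z) + lor4 (dy f z) (g z) = 0"
  using dxy_const_on[OF assms(1,2), of "\<lambda>w. lor4 (f w) (g w)" c] assms(5)
    dxy_bilinear[OF bounded_bilinear_lor4 assms(3,4)] by auto

lemma lor4_eq_deriv:
  fixes f g h k :: "complex \<Rightarrow> real^4"
  assumes "open U" "z \<in> U" "f differentiable (at z)" "g differentiable (at z)"
    "h differentiable (at z)" "k differentiable (at z)"
    "\<And>w. w \<in> U \<Longrightarrow> lor4 (f w) (g w) = lor4 (h w) (k w)"
  shows "lor4 (f z) (dx g z) + lor4 (dx f z) (g z) = lor4 (h z) (dx k z) + lor4 (dx h z) (k z)"
    "lor4 (f z) (dy g z) + lor4 (dy f z) (g z) = lor4 (h z) (dy k z) + lor4 (dy h z) (k z)"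
  using dx_cong[OF assms(1,2), of "\<lambda>w. lor4 (f w) (g w)" "\<lambda>w. lor4 (h w) (k w)"] assms(7)
    dxy_bilinear[OF bounded_bilinear_lor4 assms(3,4)] dxy_bilinear[OF bounded_bilinear_lor4 assms(5,6)]
  by auto

lemma smooth_diffs:
  assumes "smooth_on U f" "z \<in> U"
  shows "f differentiable (at z)" "dx f differentiable (at z)" "dy f differentiable (at z)"
    "dx (dx f) differentiable (at z)" "dy (dx f) differentiable (at z)"
    "dx (dy f) differentiable (at z)" "dy (dy f) differentiable (at z)"
proof -
  have s: "smooth_on U (dx f)" "smooth_on U (dy f)" "smooth_on U (dx (dx f))" "smooth_on U (dy (dx f))"
     "smooth_on U (dx (dy f))" "smooth_on U (dy (dy f))"
    using smooth_dx smooth_dy assms(1) by (meson smooth_dx smooth_dy)+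
  show "f differentiable (at z)" "dx f differentiable (at z)" "dy f differentiable (at z)"
    "dx (dx f) differentiable (at z)" "dy (dx f) differentiable (at z)"
    "dx (dy f) differentiable (at z)" "dy (dy f) differentiable (at z)"
    using smooth_diff[OF _ assms(2)] s assms(1) by auto
qed

lemma smooth_Ck2: "smooth_on U f \<Longrightarrow> Ck 2 U f"
  unfolding smooth_on_def by blast

lemma frame_ip:
  fixes X Y E M a V :: "real^4"
  assumes l: "lam > 0" and XX: "lor4 X X = lam" and YY: "lor4 Y Y = lam" and XY: "lor4 X Y = 0"
    and EE: "lor4 E E = 1" and MM: "lor4 M M = -1" and EX: "lor4 E X = 0" and EY: "lor4 E Y = 0"
    and EM: "lor4 E M = 0" and MX: "lor4 M X = 0" and MY: "lor4 M Y = 0"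
  shows "lor4 a V = (lor4 a X * lor4 X V + lor4 a Y * lor4 Y V) * inverse lam + lor4 a E * lor4 E V - lor4 a M * lor4 M V"
proof -
  have "lor4 a V = lor4 ((lor4 a X / lam) *\<^sub>R X + (lor4 a Y / lam) *\<^sub>R Y + lor4 a E *\<^sub>R E - lor4 a M *\<^sub>R M) V"
    using frame[OF assms, of a] by simp
  then show ?thesis by (simp add: divide_inverse algebra_simps)
qed

lemma dxy_inverse:
  fixes f :: "complex \<Rightarrow> real"
  assumes "f differentiable (at z)" "f z \<noteq> 0"
  shows "dx (\<lambda>w. inverse (f w)) z = - (inverse (f z) * inverse (f z)) * dx f z"
    "dy (\<lambda>w. inverse (f w)) z = - (inverse (f z) * inverse (f z)) * dy f z"
    "(\<lambda>w. inverse (f w)) differentiable (at z)"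
proof -
  have "(f has_derivative frechet_derivative f (at z)) (at z)"
    using assms(1) frechet_derivative_works by blast
  from Deriv.has_derivative_inverse[OF assms(2) this]
  have H: "((\<lambda>w. inverse (f w)) has_derivative (\<lambda>h. - (inverse (f z) * frechet_derivative f (at z) h * inverse (f z)))) (at z)" .
  from dxy_of_has[OF H] show "dx (\<lambda>w. inverse (f w)) z = - (inverse (f z) * inverse (f z)) * dx f z"
    "dy (\<lambda>w. inverse (f w)) z = - (inverse (f z) * inverse (f z)) * dy f z"
    by (simp_all add: dx_def dy_def)
  show "(\<lambda>w. inverse (f w)) differentiable (at z)" using H unfolding differentiable_def by blast
qed

lemma dxy_sum_lor4:
  fixes f g h k :: "complex \<Rightarrow> real^4"
  assumes "f differentiable (at z)" "g differentiable (at z)" "h differentiable (at z)" "k differentiable (at z)"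
  shows "dx (\<lambda>w. lor4 (f w) (g w) + lor4 (h w) (k w)) z
          = (lor4 (f z) (dx g z) + lor4 (dx f z) (g z)) + (lor4 (h z) (dx k z) + lor4 (dx h z) (k z))"
    "dy (\<lambda>w. lor4 (f w) (g w) + lor4 (h w) (k w)) z
          = (lor4 (f z) (dy g z) + lor4 (dy f z) (g z)) + (lor4 (h z) (dy k z) + lor4 (dy h z) (k z))"
  using dxy_add[OF diff_bilinear[OF bounded_bilinear_lor4 assms(1,2)] diff_bilinear[OF bounded_bilinear_lor4 assms(3,4)]]
    dxy_bilinear[OF bounded_bilinear_lor4 assms(1,2)] dxy_bilinear[OF bounded_bilinear_lor4 assms(3,4)]
  by auto

lemma dxy_mult_lor4:
  fixes f g :: "complex \<Rightarrow> real^4" and a :: "complex \<Rightarrow> real"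
  assumes "a differentiable (at z)" "f differentiable (at z)" "g differentiable (at z)"
  shows "dx (\<lambda>w. a w * lor4 (f w) (g w)) z = a z * (lor4 (f z) (dx g z) + lor4 (dx f z) (g z)) + dx a z * lor4 (f z) (g z)"
    "dy (\<lambda>w. a w * lor4 (f w) (g w)) z = a z * (lor4 (f z) (dy g z) + lor4 (dy f z) (g z)) + dy a z * lor4 (f z) (g z)"
  using dxy_bilinear[OF bounded_bilinear_mult assms(1) diff_bilinear[OF bounded_bilinear_lor4 assms(2,3)]]
    dxy_bilinear[OF bounded_bilinear_lor4 assms(2,3)]
  by auto

locale cmc =
  fixes U :: "complex set" and \<psi> \<eta> :: "complex \<Rightarrow> real ^ 4"
  assumes U: "open U"
    and conf: "conformal_immersion_H2R U \<psi>"
    and un: "unit_normal U \<psi> \<eta>"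
    and upos: "\<forall>z\<in>U. \<eta> z $ 4 > 0"
    and Hc: "\<forall>z\<in>U. mean_curv \<psi> \<eta> z = 1/2"
begin

definition Gt :: "complex \<Rightarrow> real^4" where
  "Gt w = inverse (\<eta> w $ 4) *\<^sub>R (\<eta> w + horiz (\<psi> w))"

lemma sm_psi: "smooth_on U \<psi>" using conf by (simp add: conformal_immersion_H2R_def)
lemma sm_eta: "smooth_on U \<eta>" using un by (simp add: unit_normal_def)

lemma sm_Gt: "smooth_on U Gt"
  unfolding smooth_on_def
proof
  fix k
  have "Ck k U (\<lambda>w. \<eta> w $ 4)" using Ck_linear[OF U bounded_linear_vec_nth] sm_eta
    unfolding smooth_on_def by blast
  moreover have "\<forall>z\<in>U. \<eta> z $ 4 \<noteq> 0" using upos by auto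
  ultimately have a: "Ck k U (\<lambda>w. inverse (\<eta> w $ 4))" by (rule Ck_inverse[OF U])
  have "Ck k U (\<lambda>w. horiz (\<psi> w))" using Ck_linear[OF U bounded_linear_horiz] sm_psi
    unfolding smooth_on_def by blast
  then have b: "Ck k U (\<lambda>w. \<eta> w + horiz (\<psi> w))" using Ck_add[OF U] sm_eta
    unfolding smooth_on_def by blast
  show "Ck k U Gt" unfolding Gt_def[abs_def]
    by (rule Ck_bilinear[OF U bounded_bilinear_scaleR a b])
qed

lemma sm_M: "smooth_on U (\<lambda>w. horiz (\<psi> w))"
  using Ck_linear[OF U bounded_linear_horiz] sm_psi unfolding smooth_on_def by blast

lemmas dpsi = smooth_diffs[OF sm_psi]
lemmas deta = smooth_diffs[OF sm_eta]
lemmas dGt = smooth_diffs[OF sm_Gt]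
lemmas dM = smooth_diffs[OF sm_M]

lemma dM_eq: "w \<in> U \<Longrightarrow> dx (\<lambda>w. horiz (\<psi> w)) w = horiz (dx \<psi> w) \<and> dy (\<lambda>w. horiz (\<psi> w)) w = horiz (dy \<psi> w)"
  using dxy_linear[OF bounded_linear_horiz dpsi(1)] by auto

lemma basic:
  assumes w: "w \<in> U"
  shows "lor4 (dx \<psi> w) (dx \<psi> w) > 0"
    "lor4 (dy \<psi> w) (dy \<psi> w) = lor4 (dx \<psi> w) (dx \<psi> w)"
    "lor4 (dx \<psi> w) (dy \<psi> w) = 0"
    "lor4 (\<eta> w) (\<eta> w) = 1" "lor4 (\<eta> w) (dx \<psi> w) = 0" "lor4 (\<eta> w) (dy \<psi> w) = 0"
    "lor4 (\<eta> w) (horiz (\<psi> w)) = 0"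
    "lor4 (horiz (\<psi> w)) (horiz (\<psi> w)) = -1" "horiz (\<psi> w) $ 1 > 0"
proof -
  have c: "proj3 (\<psi> w) \<in> H2" "lor4 (dz \<psi> w) (dz \<psi> w) = 0" "conf_factor \<psi> w > 0"
    using conf w by (auto simp: conformal_immersion_H2R_def)
  from c(2) have "Complex ((lor4 (dx \<psi> w) (dx \<psi> w) - lor4 (dy \<psi> w) (dy \<psi> w)) / 4)
       (- (lor4 (dx \<psi> w) (dy \<psi> w) + lor4 (dy \<psi> w) (dx \<psi> w)) / 4) = 0"
    unfolding dz_def lor4_cdz .
  then show "lor4 (dy \<psi> w) (dy \<psi> w) = lor4 (dx \<psi> w) (dx \<psi> w)" "lor4 (dx \<psi> w) (dy \<psi> w) = 0"
    using lor4_sym[of "dy \<psi> w" "dx \<psi> w"] by (auto simp: complex_eq_iff)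
  show "lor4 (dx \<psi> w) (dx \<psi> w) > 0" using c(3) by (simp add: conf_factor_def)
  show "lor4 (\<eta> w) (\<eta> w) = 1" "lor4 (\<eta> w) (dx \<psi> w) = 0" "lor4 (\<eta> w) (dy \<psi> w) = 0"
    "lor4 (\<eta> w) (horiz (\<psi> w)) = 0" using un w by (auto simp: unit_normal_def)
  have "lor3 (proj3 (horiz (\<psi> w))) (proj3 (horiz (\<psi> w))) = -1" using c(1) by (simp add: H2_def)
  then show "lor4 (horiz (\<psi> w)) (horiz (\<psi> w)) = -1" unfolding lor3_proj3 by simp
  show "horiz (\<psi> w) $ 1 > 0" using c(1) by (simp add: H2_def)
qed

lemma deriv1:
  assumes w: "w \<in> U"
  shows "lor4 (\<eta> w) (dx \<eta> w) = 0" "lor4 (\<eta> w) (dy \<eta> w) = 0"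
    "lor4 (\<eta> w) (dx (dx \<psi>) w) + lor4 (dx \<eta> w) (dx \<psi> w) = 0"
    "lor4 (\<eta> w) (dy (dx \<psi>) w) + lor4 (dy \<eta> w) (dx \<psi> w) = 0"
    "lor4 (\<eta> w) (dx (dy \<psi>) w) + lor4 (dx \<eta> w) (dy \<psi> w) = 0"
    "lor4 (\<eta> w) (dy (dy \<psi>) w) + lor4 (dy \<eta> w) (dy \<psi> w) = 0"
    "lor4 (\<eta> w) (horiz (dx \<psi> w)) + lor4 (dx \<eta> w) (horiz (\<psi> w)) = 0"
    "lor4 (\<eta> w) (horiz (dy \<psi> w)) + lor4 (dy \<eta> w) (horiz (\<psi> w)) = 0"
    "lor4 (horiz (\<psi> w)) (dx \<psi> w) = 0" "lor4 (horiz (\<psi> w)) (dy \<psi> w) = 0"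
    "lor4 (dx \<psi> w) (dx (dx \<psi>) w) + lor4 (dx (dx \<psi>) w) (dx \<psi> w)
       = lor4 (dy \<psi> w) (dx (dy \<psi>) w) + lor4 (dx (dy \<psi>) w) (dy \<psi> w)"
    "lor4 (dx \<psi> w) (dy (dx \<psi>) w) + lor4 (dy (dx \<psi>) w) (dx \<psi> w)
       = lor4 (dy \<psi> w) (dy (dy \<psi>) w) + lor4 (dy (dy \<psi>) w) (dy \<psi> w)"
    "lor4 (dx \<psi> w) (dx (dy \<psi>) w) + lor4 (dx (dx \<psi>) w) (dy \<psi> w) = 0"
    "lor4 (dx \<psi> w) (dy (dy \<psi>) w) + lor4 (dy (dx \<psi>) w) (dy \<psi> w) = 0"
    "lor4 (horiz (\<psi> w)) (dx (dx \<psi>) w) + lor4 (horiz (dx \<psi> w)) (dx \<psi> w) = 0"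
    "lor4 (horiz (\<psi> w)) (dy (dx \<psi>) w) + lor4 (horiz (dy \<psi> w)) (dx \<psi> w) = 0"
    "lor4 (horiz (\<psi> w)) (dx (dy \<psi>) w) + lor4 (horiz (dx \<psi> w)) (dy \<psi> w) = 0"
    "lor4 (horiz (\<psi> w)) (dy (dy \<psi>) w) + lor4 (horiz (dy \<psi> w)) (dy \<psi> w) = 0"
    "dy (dx \<psi>) w = dx (dy \<psi>) w"
    "lor4 (dx (dx \<psi>) w + dy (dy \<psi>) w) (\<eta> w) = lor4 (dx \<psi> w) (dx \<psi> w)"
proof -
  note B = basic
  have e1: "lor4 (\<eta> w) (dx \<eta> w) + lor4 (dx \<eta> w) (\<eta> w) = 0" "lor4 (\<eta> w) (dy \<eta> w) + lor4 (dy \<eta> w) (\<eta> w) = 0"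
    using lor4_const_deriv[OF U w deta(1)[OF w] deta(1)[OF w], of 1] B(4) by auto
  then show "lor4 (\<eta> w) (dx \<eta> w) = 0" "lor4 (\<eta> w) (dy \<eta> w) = 0"
    using lor4_sym[of "\<eta> w" "dx \<eta> w"] lor4_sym[of "\<eta> w" "dy \<eta> w"] by auto
  show "lor4 (\<eta> w) (dx (dx \<psi>) w) + lor4 (dx \<eta> w) (dx \<psi> w) = 0"
    "lor4 (\<eta> w) (dy (dx \<psi>) w) + lor4 (dy \<eta> w) (dx \<psi> w) = 0"
    using lor4_const_deriv[OF U w deta(1)[OF w] dpsi(2)[OF w], of 0] B(5) by auto
  show "lor4 (\<eta> w) (dx (dy \<psi>) w) + lor4 (dx \<eta> w) (dy \<psi> w) = 0"
    "lor4 (\<eta> w) (dy (dy \<psi>) w) + lor4 (dy \<eta> w) (dy \<psi> w) = 0"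
    using lor4_const_deriv[OF U w deta(1)[OF w] dpsi(3)[OF w], of 0] B(6) by auto
  show "lor4 (\<eta> w) (horiz (dx \<psi> w)) + lor4 (dx \<eta> w) (horiz (\<psi> w)) = 0"
    "lor4 (\<eta> w) (horiz (dy \<psi> w)) + lor4 (dy \<eta> w) (horiz (\<psi> w)) = 0"
    using lor4_const_deriv[OF U w deta(1)[OF w] dM(1)[OF w], of 0] B(7) dM_eq[OF w] by auto
  have MX: "lor4 (horiz (\<psi> v)) (dx \<psi> v) = 0 \<and> lor4 (horiz (\<psi> v)) (dy \<psi> v) = 0" if v: "v \<in> U" for v
  proof -
    have "lor4 (horiz (\<psi> v)) (horiz (dx \<psi> v)) + lor4 (horiz (dx \<psi> v)) (horiz (\<psi> v)) = 0"
      "lor4 (horiz (\<psi> v)) (horiz (dy \<psi> v)) + lor4 (horiz (dy \<psi> v)) (horiz (\<psi> v)) = 0"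
      using lor4_const_deriv[OF U v dM(1)[OF v] dM(1)[OF v], of "-1"] basic(8) dM_eq[OF v] by auto
    then show ?thesis
      using lor4_sym[of "horiz (\<psi> v)" "horiz (dx \<psi> v)"] lor4_sym[of "horiz (\<psi> v)" "horiz (dy \<psi> v)"]
      by (simp add: lor4_horiz)
  qed
  then show "lor4 (horiz (\<psi> w)) (dx \<psi> w) = 0" "lor4 (horiz (\<psi> w)) (dy \<psi> w) = 0" using w by auto
  show "lor4 (dx \<psi> w) (dx (dx \<psi>) w) + lor4 (dx (dx \<psi>) w) (dx \<psi> w)
       = lor4 (dy \<psi> w) (dx (dy \<psi>) w) + lor4 (dx (dy \<psi>) w) (dy \<psi> w)"
    "lor4 (dx \<psi> w) (dy (dx \<psi>) w) + lor4 (dy (dx \<psi>) w) (dx \<psi> w)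
       = lor4 (dy \<psi> w) (dy (dy \<psi>) w) + lor4 (dy (dy \<psi>) w) (dy \<psi> w)"
    using lor4_eq_deriv[OF U w dpsi(2)[OF w] dpsi(2)[OF w] dpsi(3)[OF w] dpsi(3)[OF w]] basic(2) by auto
  show "lor4 (dx \<psi> w) (dx (dy \<psi>) w) + lor4 (dx (dx \<psi>) w) (dy \<psi> w) = 0"
    "lor4 (dx \<psi> w) (dy (dy \<psi>) w) + lor4 (dy (dx \<psi>) w) (dy \<psi> w) = 0"
    using lor4_const_deriv[OF U w dpsi(2)[OF w] dpsi(3)[OF w], of 0] basic(3) by auto
  show "lor4 (horiz (\<psi> w)) (dx (dx \<psi>) w) + lor4 (horiz (dx \<psi> w)) (dx \<psi> w) = 0"
    "lor4 (horiz (\<psi> w)) (dy (dx \<psi>) w) + lor4 (horiz (dy \<psi> w)) (dx \<psi> w) = 0"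
    using lor4_const_deriv[OF U w dM(1)[OF w] dpsi(2)[OF w], of 0] MX dM_eq[OF w] by auto
  show "lor4 (horiz (\<psi> w)) (dx (dy \<psi>) w) + lor4 (horiz (dx \<psi> w)) (dy \<psi> w) = 0"
    "lor4 (horiz (\<psi> w)) (dy (dy \<psi>) w) + lor4 (horiz (dy \<psi> w)) (dy \<psi> w) = 0"
    using lor4_const_deriv[OF U w dM(1)[OF w] dpsi(3)[OF w], of 0] MX dM_eq[OF w] by auto
  show "dy (dx \<psi>) w = dx (dy \<psi>) w" by (rule schwarz[OF U smooth_Ck2[OF sm_psi] w])
  have "mean_curv \<psi> \<eta> w = 1/2" using Hc w by auto
  then show "lor4 (dx (dx \<psi>) w + dy (dy \<psi>) w) (\<eta> w) = lor4 (dx \<psi> w) (dx \<psi> w)"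
    using B(1)[OF w] by (simp add: mean_curv_def laplacian_def conf_factor_def field_simps)
qed

lemma frame_at:
  assumes w: "w \<in> U"
  shows "lor4 a V = (lor4 a (dx \<psi> w) * lor4 (dx \<psi> w) V + lor4 a (dy \<psi> w) * lor4 (dy \<psi> w) V)
           * inverse (lor4 (dx \<psi> w) (dx \<psi> w))
         + lor4 a (\<eta> w) * lor4 (\<eta> w) V - lor4 a (horiz (\<psi> w)) * lor4 (horiz (\<psi> w)) V"
  by (rule frame_ip) (use basic[OF w] deriv1[OF w] lor4_sym in auto)

lemma dGt_eq:
  assumes w: "w \<in> U"
  shows "dx Gt w = inverse (\<eta> w $ 4) *\<^sub>R (dx \<eta> w + horiz (dx \<psi> w))
           + (- (inverse (\<eta> w $ 4) * inverse (\<eta> w $ 4)) * (dx \<eta> w $ 4)) *\<^sub>R (\<eta> w + horiz (\<psi> w))"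
    "dy Gt w = inverse (\<eta> w $ 4) *\<^sub>R (dy \<eta> w + horiz (dy \<psi> w))
           + (- (inverse (\<eta> w $ 4) * inverse (\<eta> w $ 4)) * (dy \<eta> w $ 4)) *\<^sub>R (\<eta> w + horiz (\<psi> w))"
proof -
  have u: "(\<lambda>w. \<eta> w $ 4) differentiable (at w)" by (rule diff_linear[OF bounded_linear_vec_nth deta(1)[OF w]])
  have u0: "\<eta> w $ 4 \<noteq> 0" using upos w by auto
  have du: "dx (\<lambda>w. \<eta> w $ 4) w = dx \<eta> w $ 4" "dy (\<lambda>w. \<eta> w $ 4) w = dy \<eta> w $ 4"
    using dxy_linear[OF bounded_linear_vec_nth deta(1)[OF w]] by auto
  have V: "(\<lambda>w. \<eta> w + horiz (\<psi> w)) differentiable (at w)"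
    using deta(1)[OF w] dM(1)[OF w] by (rule differentiable_add)
  have dV: "dx (\<lambda>w. \<eta> w + horiz (\<psi> w)) w = dx \<eta> w + horiz (dx \<psi> w)"
    "dy (\<lambda>w. \<eta> w + horiz (\<psi> w)) w = dy \<eta> w + horiz (dy \<psi> w)"
    using dxy_add[OF deta(1)[OF w] dM(1)[OF w]] dM_eq[OF w] by auto
  have G: "Gt = (\<lambda>w. inverse (\<eta> w $ 4) *\<^sub>R (\<eta> w + horiz (\<psi> w)))" by (simp add: Gt_def[abs_def])
  show "dx Gt w = inverse (\<eta> w $ 4) *\<^sub>R (dx \<eta> w + horiz (dx \<psi> w))
           + (- (inverse (\<eta> w $ 4) * inverse (\<eta> w $ 4)) * (dx \<eta> w $ 4)) *\<^sub>R (\<eta> w + horiz (\<psi> w))"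
    "dy Gt w = inverse (\<eta> w $ 4) *\<^sub>R (dy \<eta> w + horiz (dy \<psi> w))
           + (- (inverse (\<eta> w $ 4) * inverse (\<eta> w $ 4)) * (dy \<eta> w $ 4)) *\<^sub>R (\<eta> w + horiz (\<psi> w))"
    unfolding G dxy_bilinear[OF bounded_bilinear_scaleR dxy_inverse(3)[OF u u0] V] dxy_inverse(1,2)[OF u u0] du dV
    by simp_all
qed

lemma table:
  assumes w: "w \<in> U"
  defines "lam \<equiv> lor4 (dx \<psi> w) (dx \<psi> w)" and "u \<equiv> \<eta> w $ 4" and "X4 \<equiv> dx \<psi> w $ 4" and "Y4 \<equiv> dy \<psi> w $ 4"
    and "L \<equiv> lor4 (\<eta> w) (dx (dx \<psi>) w)" and "Mm \<equiv> lor4 (\<eta> w) (dy (dx \<psi>) w)"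
    and "Nn \<equiv> lor4 (\<eta> w) (dy (dy \<psi>) w)" and "ex4 \<equiv> dx \<eta> w $ 4" and "ey4 \<equiv> dy \<eta> w $ 4"
  shows "lam * inverse lam = 1" "u * inverse u = 1" "Nn = lam - L" "lam * u^2 = lam - X4^2 - Y4^2"
    "ex4 * lam = -(L*X4 + Mm*Y4)" "ey4 * lam = -(Mm*X4 + Nn*Y4)"
    "lor4 (dx Gt w) (dx \<psi> w) * u = lam - L - X4^2"
    "lor4 (dx Gt w) (dy \<psi> w) * u = -(Mm + X4*Y4)"
    "lor4 (dy Gt w) (dx \<psi> w) * u = -(Mm + X4*Y4)"
    "lor4 (dy Gt w) (dy \<psi> w) * u = lam - Nn - Y4^2"
    "lor4 (dx Gt w) (\<eta> w) = -X4 - ex4 * (inverse u)^2"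
    "lor4 (dx Gt w) (horiz (\<psi> w)) = - lor4 (dx Gt w) (\<eta> w)"
    "lor4 (dy Gt w) (\<eta> w) = -Y4 - ey4 * (inverse u)^2"
    "lor4 (dy Gt w) (horiz (\<psi> w)) = - lor4 (dy Gt w) (\<eta> w)"
proof -
  note B = basic[OF w] and D = deriv1[OF w]
  have l: "lam > 0" using B(1) by (simp add: lam_def)
  have u: "u > 0" using upos w by (simp add: u_def)
  show "lam * inverse lam = 1" "u * inverse u = 1" using l u by auto
  have sym: "\<And>a b. lor4 a b = lor4 b a" by (rule lor4_sym)
  have "L + Nn = lam" using D(20) unfolding L_def Nn_def lam_def by (simp add: sym)
  then show "Nn = lam - L" by simp
  have M4: "horiz (\<psi> w) $ 4 = 0" by simp
  have "lor4 e4 e4 = (lor4 e4 (dx \<psi> w) * lor4 (dx \<psi> w) e4 + lor4 e4 (dy \<psi> w) * lor4 (dy \<psi> w) e4)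
           * inverse lam + lor4 e4 (\<eta> w) * lor4 (\<eta> w) e4 - lor4 e4 (horiz (\<psi> w)) * lor4 (horiz (\<psi> w)) e4"
    unfolding lam_def by (rule frame_at[OF w])
  then have "1 = (X4 * X4 + Y4 * Y4) * inverse lam + u * u" unfolding X4_def Y4_def u_def by simp
  then show "lam * u^2 = lam - X4^2 - Y4^2" using l by (simp add: field_simps power2_eq_square)
  have ExX: "lor4 (dx \<eta> w) (dx \<psi> w) = - L" using D(3) by (simp add: L_def)
  have ExY: "lor4 (dx \<eta> w) (dy \<psi> w) = - Mm" using D(5) D(19) by (simp add: Mm_def)
  have EyX: "lor4 (dy \<eta> w) (dx \<psi> w) = - Mm" using D(4) by (simp add: Mm_def)
  have EyY: "lor4 (dy \<eta> w) (dy \<psi> w) = - Nn" using D(6) by (simp add: Nn_def)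
  have ExM: "lor4 (dx \<eta> w) (horiz (\<psi> w)) = X4 * u" using D(7) B(5)
    by (simp add: lor4_horiz X4_def u_def sym)
  have EyM: "lor4 (dy \<eta> w) (horiz (\<psi> w)) = Y4 * u" using D(8) B(6)
    by (simp add: lor4_horiz Y4_def u_def sym)
  have "lor4 (dx \<eta> w) e4 = (lor4 (dx \<eta> w) (dx \<psi> w) * lor4 (dx \<psi> w) e4 + lor4 (dx \<eta> w) (dy \<psi> w) * lor4 (dy \<psi> w) e4)
           * inverse lam + lor4 (dx \<eta> w) (\<eta> w) * lor4 (\<eta> w) e4 - lor4 (dx \<eta> w) (horiz (\<psi> w)) * lor4 (horiz (\<psi> w)) e4"
    unfolding lam_def by (rule frame_at[OF w])
  then have "ex4 = (-L * X4 + -Mm * Y4) * inverse lam"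
    unfolding ExX ExY using D(1) by (simp add: ex4_def X4_def Y4_def sym)
  then show "ex4 * lam = -(L*X4 + Mm*Y4)" using l by (simp add: field_simps)
  have "lor4 (dy \<eta> w) e4 = (lor4 (dy \<eta> w) (dx \<psi> w) * lor4 (dx \<psi> w) e4 + lor4 (dy \<eta> w) (dy \<psi> w) * lor4 (dy \<psi> w) e4)
           * inverse lam + lor4 (dy \<eta> w) (\<eta> w) * lor4 (\<eta> w) e4 - lor4 (dy \<eta> w) (horiz (\<psi> w)) * lor4 (horiz (\<psi> w)) e4"
    unfolding lam_def by (rule frame_at[OF w])
  then have "ey4 = (-Mm * X4 + -Nn * Y4) * inverse lam"
    unfolding EyX EyY using D(2) by (simp add: ey4_def X4_def Y4_def sym)
  then show "ey4 * lam = -(Mm*X4 + Nn*Y4)" using l by (simp add: field_simps)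
  note G = dGt_eq[OF w, folded u_def]
  have MX: "lor4 (horiz (\<psi> w)) (dx \<psi> w) = 0" "lor4 (horiz (\<psi> w)) (dy \<psi> w) = 0" using D(9,10) .
  show "lor4 (dx Gt w) (dx \<psi> w) * u = lam - L - X4^2"
    unfolding G(1) using u MX B(5) ExX by (simp add: lor4_horiz sym lam_def X4_def power2_eq_square field_simps)
  show "lor4 (dx Gt w) (dy \<psi> w) * u = -(Mm + X4*Y4)"
    unfolding G(1) using u MX B(3,6) ExY by (simp add: lor4_horiz sym X4_def Y4_def field_simps)
  show "lor4 (dy Gt w) (dx \<psi> w) * u = -(Mm + X4*Y4)"
    unfolding G(2) using u MX B(3,5) EyX by (simp add: lor4_horiz sym X4_def Y4_def field_simps)
  show "lor4 (dy Gt w) (dy \<psi> w) * u = lam - Nn - Y4^2"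
    unfolding G(2) using u MX B(2,6) EyY by (simp add: lor4_horiz sym lam_def Y4_def power2_eq_square field_simps)
  show "lor4 (dx Gt w) (\<eta> w) = -X4 - ex4 * (inverse u)^2"
    unfolding G(1) using u B(4,5,7) D(1) by (simp add: lor4_horiz sym X4_def u_def ex4_def power2_eq_square field_simps)
  show "lor4 (dx Gt w) (horiz (\<psi> w)) = - lor4 (dx Gt w) (\<eta> w)"
  proof -
    have "lor4 (horiz (dx \<psi> w)) (horiz (\<psi> w)) = 0" using MX by (simp add: lor4_horiz sym)
    moreover have "lor4 (\<eta> w) (horiz (dx \<psi> w)) = - (dx \<psi> w $ 4 * \<eta> w $ 4)" using B(5) by (simp add: lor4_horiz)
    ultimately show ?thesis
      unfolding G(1) using u B(4,5,7,8) D(1) ExM by (simp add: sym X4_def u_def ex4_def field_simps)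
  qed
  show "lor4 (dy Gt w) (\<eta> w) = -Y4 - ey4 * (inverse u)^2"
    unfolding G(2) using u B(4,6,7) D(2) by (simp add: lor4_horiz sym Y4_def u_def ey4_def power2_eq_square field_simps)
  show "lor4 (dy Gt w) (horiz (\<psi> w)) = - lor4 (dy Gt w) (\<eta> w)"
  proof -
    have "lor4 (horiz (dy \<psi> w)) (horiz (\<psi> w)) = 0" using MX by (simp add: lor4_horiz sym)
    moreover have "lor4 (\<eta> w) (horiz (dy \<psi> w)) = - (dy \<psi> w $ 4 * \<eta> w $ 4)" using B(6) by (simp add: lor4_horiz)
    ultimately show ?thesis
      unfolding G(2) using u B(4,6,7,8) D(2) EyM by (simp add: sym Y4_def u_def ey4_def field_simps)
  qed
qed

lemma Gt_pt:
  assumes w: "w \<in> U"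
  shows "lor4 (Gt w) (Gt w) = 0" "Gt w $ 4 = 1" "lor4 (Gt w) (dx \<psi> w) = 0" "lor4 (Gt w) (dy \<psi> w) = 0"
    "lor4 (Gt w) (\<eta> w) = inverse (\<eta> w $ 4)" "lor4 (Gt w) (horiz (\<psi> w)) = - inverse (\<eta> w $ 4)"
proof -
  note B = basic[OF w] and D = deriv1[OF w]
  have u: "\<eta> w $ 4 > 0" using upos w by auto
  have sym: "\<And>a b. lor4 a b = lor4 b a" by (rule lor4_sym)
  show "lor4 (Gt w) (Gt w) = 0" unfolding Gt_def using B(4,7,8) by (simp add: sym)
  show "Gt w $ 4 = 1" unfolding Gt_def using u by simp
  show "lor4 (Gt w) (dx \<psi> w) = 0" "lor4 (Gt w) (dy \<psi> w) = 0" unfolding Gt_def using B(5,6) D(9,10) by simp_all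
  show "lor4 (Gt w) (\<eta> w) = inverse (\<eta> w $ 4)" "lor4 (Gt w) (horiz (\<psi> w)) = - inverse (\<eta> w $ 4)"
    unfolding Gt_def using B(4,7,8) by (simp_all add: sym)
qed

lemma Gt_pt2:
  assumes w: "w \<in> U"
  shows "lor4 (dx Gt w) (Gt w) = 0" "lor4 (dy Gt w) (Gt w) = 0" "dx Gt w $ 4 = 0" "dy Gt w $ 4 = 0"
    "lor4 (dx Gt w) (dx \<psi> w) + lor4 (dy Gt w) (dy \<psi> w) = \<eta> w $ 4 * lor4 (dx \<psi> w) (dx \<psi> w)"
    "lor4 (dy Gt w) (dx \<psi> w) = lor4 (dx Gt w) (dy \<psi> w)"
proof -
  have "lor4 (Gt w) (dx Gt w) + lor4 (dx Gt w) (Gt w) = 0" "lor4 (Gt w) (dy Gt w) + lor4 (dy Gt w) (Gt w) = 0"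
    using lor4_const_deriv[OF U w dGt(1)[OF w] dGt(1)[OF w], of 0] Gt_pt(1) by auto
  then show "lor4 (dx Gt w) (Gt w) = 0" "lor4 (dy Gt w) (Gt w) = 0"
    using lor4_sym[of "Gt w" "dx Gt w"] lor4_sym[of "Gt w" "dy Gt w"] by auto
  have "dx (\<lambda>w. Gt w $ 4) w = 0" "dy (\<lambda>w. Gt w $ 4) w = 0"
    using dxy_const_on[OF U w, of "\<lambda>w. Gt w $ 4" 1] Gt_pt(2) by auto
  then show "dx Gt w $ 4 = 0" "dy Gt w $ 4 = 0"
    using dxy_linear[OF bounded_linear_vec_nth dGt(1)[OF w]] by auto
  note T = table[OF w]
  have u: "\<eta> w $ 4 > 0" using upos w by auto
  have "(lor4 (dx Gt w) (dx \<psi> w) + lor4 (dy Gt w) (dy \<psi> w)) * \<eta> w $ 4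
      = (\<eta> w $ 4 * lor4 (dx \<psi> w) (dx \<psi> w)) * \<eta> w $ 4"
    using T(3,4,7,10) by (simp add: algebra_simps power2_eq_square)
  then show "lor4 (dx Gt w) (dx \<psi> w) + lor4 (dy Gt w) (dy \<psi> w) = \<eta> w $ 4 * lor4 (dx \<psi> w) (dx \<psi> w)"
    using u by simp
  have "lor4 (dy Gt w) (dx \<psi> w) * \<eta> w $ 4 = lor4 (dx Gt w) (dy \<psi> w) * \<eta> w $ 4"
    using T(8,9) by simp
  then show "lor4 (dy Gt w) (dx \<psi> w) = lor4 (dx Gt w) (dy \<psi> w)" using u by simp
qed

end

lemma pos_first:
  fixes E M :: "real^4"
  assumes EE: "lor4 E E = 1" and EM: "lor4 E M = 0" and MM: "lor4 M M = -1" and M1: "M$1 > 0"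
    and M4: "M$4 = 0" and E4: "E$4 > 0"
  shows "E$1 + M$1 > 0"
proof -
  have e: "E$2^2 + E$3^2 = 1 + E$1^2 - E$4^2" using EE by (simp add: lor4_def power2_eq_square)
  have m: "M$2^2 + M$3^2 = M$1^2 - 1" using MM M4 by (simp add: lor4_def power2_eq_square)
  have em: "E$2*M$2 + E$3*M$3 = E$1*M$1" using EM M4 by (simp add: lor4_def)
  have cs: "(E$2*M$2 + E$3*M$3)^2 \<le> (E$2^2 + E$3^2) * (M$2^2 + M$3^2)"
  proof -
    have "(E$2^2 + E$3^2) * (M$2^2 + M$3^2) - (E$2*M$2 + E$3*M$3)^2 = (E$2*M$3 - E$3*M$2)^2"
      by algebra
    then show ?thesis by (metis diff_ge_0_iff_ge zero_le_power2)
  qed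
  then have "(E$1*M$1)^2 \<le> (1 + E$1^2 - E$4^2) * (M$1^2 - 1)" unfolding e m em .
  then have k: "M$1^2 - E$1^2 \<ge> 1 + E$4^2 * (M$1^2 - 1)" by (simp add: algebra_simps power2_eq_square)
  have "M$1^2 \<ge> 1" using m by (metis add_nonneg_nonneg diff_ge_0_iff_ge zero_le_power2)
  then have "E$4^2 * (M$1^2 - 1) \<ge> 0" by simp
  with k have lt: "E$1^2 < M$1^2" by linarith
  show ?thesis
  proof (rule ccontr)
    assume "\<not> E$1 + M$1 > 0"
    then have "- E$1 \<ge> M$1" by simp
    then have "(- E$1)^2 \<ge> M$1^2" using M1 by (intro power_mono) auto
    with lt show False by simp
  qed
qed

context cmc
begin

lemma harm_at:
  assumes z: "z \<in> U"
  defines "lap \<equiv> dx (dx Gt) z + dy (dy Gt) z"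
  shows "lap + lor4 lap (Gt z) *\<^sub>R (Gt z - e4) = 0"
proof -
  note T = table[OF z] and B = basic[OF z] and D = deriv1[OF z] and P = Gt_pt[OF z] and P2 = Gt_pt2[OF z]
  have sym: "\<And>a b. lor4 a b = lor4 b a" by (rule lor4_sym)
  define lam where "lam = lor4 (dx \<psi> z) (dx \<psi> z)"
  define u where "u = \<eta> z $ 4"
  define X4 where "X4 = dx \<psi> z $ 4"
  define Y4 where "Y4 = dy \<psi> z $ 4"
  define L where "L = lor4 (\<eta> z) (dx (dx \<psi>) z)"
  define Mm where "Mm = lor4 (\<eta> z) (dy (dx \<psi>) z)"
  define Nn where "Nn = lor4 (\<eta> z) (dy (dy \<psi>) z)"
  define ex4 where "ex4 = dx \<eta> z $ 4"
  define ey4 where "ey4 = dy \<eta> z $ 4"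
  define al where "al = lor4 (dx \<psi> z) (dx (dx \<psi>) z)"
  define be where "be = lor4 (dx \<psi> z) (dy (dx \<psi>) z)"
  define gxX where "gxX = lor4 (dx Gt z) (dx \<psi> z)"
  define gxY where "gxY = lor4 (dx Gt z) (dy \<psi> z)"
  define gyX where "gyX = lor4 (dy Gt z) (dx \<psi> z)"
  define gyY where "gyY = lor4 (dy Gt z) (dy \<psi> z)"
  define gxE where "gxE = lor4 (dx Gt z) (\<eta> z)"
  define gyE where "gyE = lor4 (dy Gt z) (\<eta> z)"
  define gxM where "gxM = lor4 (dx Gt z) (horiz (\<psi> z))"
  define gyM where "gyM = lor4 (dy Gt z) (horiz (\<psi> z))"
  define m where "m = inverse lam"
  define v where "v = inverse u"
  note defs = lam_def u_def X4_def Y4_def L_def Mm_def Nn_def ex4_def ey4_def al_def be_def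
    gxX_def gxY_def gyX_def gyY_def gxE_def gyE_def gxM_def gyM_def m_def v_def
  have h1: "lam * m = 1" "u * v = 1" "Nn = lam - L" "lam * u^2 = lam - X4^2 - Y4^2"
    "ex4 * lam = -(L*X4 + Mm*Y4)" "ey4 * lam = -(Mm*X4 + Nn*Y4)"
    "gxX * u = lam - L - X4^2" "gxY * u = -(Mm + X4*Y4)" "gyX * u = -(Mm + X4*Y4)" "gyY * u = lam - Nn - Y4^2"
    "gxE = -X4 - ex4 * v^2" "gxM = - gxE" "gyE = -Y4 - ey4 * v^2" "gyM = - gyE"
    using T unfolding defs by simp_all
  note A = alg_all[OF h1]
  have F: "lor4 a V = (lor4 a (dx \<psi> z) * lor4 (dx \<psi> z) V + lor4 a (dy \<psi> z) * lor4 (dy \<psi> z) V) * m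
         + lor4 a (\<eta> z) * lor4 (\<eta> z) V - lor4 a (horiz (\<psi> z)) * lor4 (horiz (\<psi> z)) V" for a V
    unfolding m_def lam_def by (rule frame_at[OF z])
  have Yx: "dx (dy \<psi>) z = dy (dx \<psi>) z" using D(19) by simp
  have tXx: "lor4 (dx \<psi> z) (dx (dx \<psi>) z) = al" "lor4 (dy \<psi> z) (dx (dx \<psi>) z) = -be"
     "lor4 (\<eta> z) (dx (dx \<psi>) z) = L" "lor4 (horiz (\<psi> z)) (dx (dx \<psi>) z) = -(lam - X4^2)"
    using D(13,15) B(3) unfolding defs Yx by (simp_all add: sym lor4_horiz power2_eq_square)
  have tXy: "lor4 (dx \<psi> z) (dy (dx \<psi>) z) = be" "lor4 (dy \<psi> z) (dy (dx \<psi>) z) = al"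
     "lor4 (\<eta> z) (dy (dx \<psi>) z) = Mm" "lor4 (horiz (\<psi> z)) (dy (dx \<psi>) z) = X4 * Y4"
    using D(11,16) B(3) unfolding defs Yx by (simp_all add: sym lor4_horiz)
  have tYy: "lor4 (dx \<psi> z) (dy (dy \<psi>) z) = -al" "lor4 (dy \<psi> z) (dy (dy \<psi>) z) = be"
     "lor4 (\<eta> z) (dy (dy \<psi>) z) = Nn" "lor4 (horiz (\<psi> z)) (dy (dy \<psi>) z) = -(lam - Y4^2)"
    using D(12,14,18) B(2) D(11) unfolding defs Yx by (simp_all add: sym lor4_horiz power2_eq_square)
  have du: "dx (\<lambda>w. \<eta> w $ 4) z = ex4" "dy (\<lambda>w. \<eta> w $ 4) z = ey4"
    using dxy_linear[OF bounded_linear_vec_nth deta(1)[OF z]] unfolding defs by auto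
  have ud: "(\<lambda>w. \<eta> w $ 4) differentiable (at z)" by (rule diff_linear[OF bounded_linear_vec_nth deta(1)[OF z]])
  have eqA: "dx (\<lambda>w. lor4 (dx Gt w) (dx \<psi> w) + lor4 (dy Gt w) (dy \<psi> w)) z = dx (\<lambda>w. \<eta> w $ 4 * lor4 (dx \<psi> w) (dx \<psi> w)) z"
     "dy (\<lambda>w. lor4 (dx Gt w) (dx \<psi> w) + lor4 (dy Gt w) (dy \<psi> w)) z = dy (\<lambda>w. \<eta> w $ 4 * lor4 (dx \<psi> w) (dx \<psi> w)) z"
    by (rule dx_cong(1)[OF U z], rule Gt_pt2(5), assumption) (rule dx_cong(2)[OF U z], rule Gt_pt2(5), assumption)
  note SL = dxy_sum_lor4[OF dGt(2)[OF z] dpsi(2)[OF z] dGt(3)[OF z] dpsi(3)[OF z]]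
  note Mlr = dxy_mult_lor4[OF ud dpsi(2)[OF z] dpsi(2)[OF z]]
  have Ax: "lor4 (dx Gt z) (dx (dx \<psi>) z) + lor4 (dx (dx Gt) z) (dx \<psi> z) + lor4 (dy Gt z) (dx (dy \<psi>) z) + lor4 (dx (dy Gt) z) (dy \<psi> z)
      = u * (2 * al) + ex4 * lam"
    using eqA(1) unfolding SL Mlr du by (simp add: defs sym)
  have Ay: "lor4 (dx Gt z) (dy (dx \<psi>) z) + lor4 (dy (dx Gt) z) (dx \<psi> z) + lor4 (dy Gt z) (dy (dy \<psi>) z) + lor4 (dy (dy Gt) z) (dy \<psi> z)
      = u * (2 * be) + ey4 * lam"
    using eqA(2) unfolding SL Mlr du by (simp add: defs sym)
  note Bq = lor4_eq_deriv[OF U z dGt(3)[OF z] dpsi(2)[OF z] dGt(2)[OF z] dpsi(3)[OF z] Gt_pt2(6)]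
  have Cx: "lor4 (dx Gt z) (dx Gt z) + lor4 (dx (dx Gt) z) (Gt z) = 0"
    using lor4_const_deriv(1)[OF U z dGt(2)[OF z] dGt(1)[OF z], of 0] Gt_pt2(1) by auto
  have Cy: "lor4 (dy Gt z) (dy Gt z) + lor4 (dy (dy Gt) z) (Gt z) = 0"
    using lor4_const_deriv(2)[OF U z dGt(3)[OF z] dGt(1)[OF z], of 0] Gt_pt2(2) by auto
  have "dx (\<lambda>w. dx Gt w $ 4) z = 0" "dy (\<lambda>w. dy Gt w $ 4) z = 0"
    using dxy_const_on[OF U z, of "\<lambda>w. dx Gt w $ 4" 0] dxy_const_on[OF U z, of "\<lambda>w. dy Gt w $ 4" 0] Gt_pt2(3,4) by auto
  then have l4: "lap $ 4 = 0"
    using dxy_linear[OF bounded_linear_vec_nth dGt(2)[OF z]] dxy_linear[OF bounded_linear_vec_nth dGt(3)[OF z]]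
    unfolding lap_def by auto
  have Sch: "dy (dx Gt) z = dx (dy Gt) z" by (rule schwarz[OF U smooth_Ck2[OF sm_Gt] z])
  have iGxXx: "lor4 (dx Gt z) (dx (dx \<psi>) z) = (gxX*al + gxY*(-be))*m + gxE*L - gxM*(-(lam - X4^2))"
    using F[of "dx Gt z" "dx (dx \<psi>) z"] unfolding tXx by (simp add: gxX_def gxY_def gxE_def gxM_def)
  have iGyXx: "lor4 (dy Gt z) (dx (dx \<psi>) z) = (gyX*al + gyY*(-be))*m + gyE*L - gyM*(-(lam - X4^2))"
    using F[of "dy Gt z" "dx (dx \<psi>) z"] unfolding tXx by (simp add: gyX_def gyY_def gyE_def gyM_def)
  have iGxXy: "lor4 (dx Gt z) (dy (dx \<psi>) z) = (gxX*be + gxY*al)*m + gxE*Mm - gxM*(X4*Y4)"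
    using F[of "dx Gt z" "dy (dx \<psi>) z"] unfolding tXy by (simp add: gxX_def gxY_def gxE_def gxM_def)
  have iGyXy: "lor4 (dy Gt z) (dy (dx \<psi>) z) = (gyX*be + gyY*al)*m + gyE*Mm - gyM*(X4*Y4)"
    using F[of "dy Gt z" "dy (dx \<psi>) z"] unfolding tXy by (simp add: gyX_def gyY_def gyE_def gyM_def)
  have iGxYy: "lor4 (dx Gt z) (dy (dy \<psi>) z) = (gxX*(-al) + gxY*be)*m + gxE*Nn - gxM*(-(lam - Y4^2))"
    using F[of "dx Gt z" "dy (dy \<psi>) z"] unfolding tYy by (simp add: gxX_def gxY_def gxE_def gxM_def)
  have iGyYy: "lor4 (dy Gt z) (dy (dy \<psi>) z) = (gyX*(-al) + gyY*be)*m + gyE*Nn - gyM*(-(lam - Y4^2))"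
    using F[of "dy Gt z" "dy (dy \<psi>) z"] unfolding tYy by (simp add: gyX_def gyY_def gyE_def gyM_def)
  have iGxGx: "lor4 (dx Gt z) (dx Gt z) = (gxX*gxX + gxY*gxY)*m + gxE*gxE - gxM*gxM"
    using F[of "dx Gt z" "dx Gt z"] by (simp add: gxX_def gxY_def gxE_def gxM_def sym)
  have iGyGy: "lor4 (dy Gt z) (dy Gt z) = (gyX*gyX + gyY*gyY)*m + gyE*gyE - gyM*gyM"
    using F[of "dy Gt z" "dy Gt z"] by (simp add: gyX_def gyY_def gyE_def gyM_def sym)
  define R where "R = lor4 lap (Gt z)"
  have R: "R = -(((gxX*gxX + gxY*gxY)*m + gxE*gxE - gxM*gxM) + ((gyX*gyX + gyY*gyY)*m + gyE*gyE - gyM*gyM))"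
    unfolding R_def lap_def using Cx Cy iGxGx iGyGy by simp
  have lapX: "lor4 lap (dx \<psi> z) = X4 * R"
  proof -
    have "lor4 lap (dx \<psi> z) = lor4 (dx (dx Gt) z) (dx \<psi> z) + lor4 (dy (dy Gt) z) (dx \<psi> z)"
      unfolding lap_def by simp
    also have "\<dots> = 2*u*al + ex4*lam - lor4 (dx Gt z) (dx (dx \<psi>) z) - 2 * lor4 (dy Gt z) (dy (dx \<psi>) z)
        + lor4 (dx Gt z) (dy (dy \<psi>) z)"
      using Ax Bq(2) Sch Yx by simp
    also have "\<dots> = X4 * R" unfolding iGxXx iGyXy iGxYy R by (rule A(1))
    finally show ?thesis .
  qed
  have lapY: "lor4 lap (dy \<psi> z) = Y4 * R"
  proof -
    have "lor4 lap (dy \<psi> z) = lor4 (dx (dx Gt) z) (dy \<psi> z) + lor4 (dy (dy Gt) z) (dy \<psi> z)"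
      unfolding lap_def by simp
    also have "\<dots> = 2*u*be + ey4*lam - 2 * lor4 (dx Gt z) (dy (dx \<psi>) z) - lor4 (dy Gt z) (dy (dy \<psi>) z)
        + lor4 (dy Gt z) (dx (dx \<psi>) z)"
      using Ay Bq(1) Sch Yx by simp
    also have "\<dots> = Y4 * R" unfolding iGxXy iGyYy iGyXx R by (rule A(2))
    finally show ?thesis .
  qed
  define lE where "lE = lor4 lap (\<eta> z)"
  define lM where "lM = lor4 lap (horiz (\<psi> z))"
  have "lap $ 4 = (lor4 lap (dx \<psi> z) * X4 + lor4 lap (dy \<psi> z) * Y4) * m + lE * u - lM * 0"
    using F[of lap e4] unfolding lE_def lM_def by (simp add: defs)
  then have e0: "(X4 * R * X4 + Y4 * R * Y4) * m + lE * u = 0" using l4 lapX lapY by simp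
  then have e1: "lE * u = - (X4 * R * X4 + Y4 * R * Y4) * m" by algebra
  have e2: "R = v * (lE + lM)" unfolding R_def lE_def lM_def Gt_def by (simp add: v_def u_def sym)
  define W where "W = lap + R *\<^sub>R (Gt z - e4)"
  have WX: "lor4 W (dx \<psi> z) = 0" unfolding W_def using lapX P(3) by (simp add: X4_def sym)
  have WY: "lor4 W (dy \<psi> z) = 0" unfolding W_def using lapY P(4) by (simp add: Y4_def sym)
  have WE': "lor4 W (\<eta> z) = lE + R * (v - u)" unfolding W_def lE_def using P(5) by (simp add: u_def v_def sym algebra_simps)
  have WM': "lor4 W (horiz (\<psi> z)) = lM - R * v" unfolding W_def lM_def using P(6) by (simp add: v_def u_def sym algebra_simps)
  have WE: "lor4 W (\<eta> z) = 0" unfolding WE' using e1 h1(1,2,4) by algebra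
  have WM: "lor4 W (horiz (\<psi> z)) = 0" unfolding WM' using e1 e2 h1(1,2,4) by algebra
  have "W = (lor4 W (dx \<psi> z) / lam) *\<^sub>R dx \<psi> z + (lor4 W (dy \<psi> z) / lam) *\<^sub>R dy \<psi> z
      + lor4 W (\<eta> z) *\<^sub>R \<eta> z - lor4 W (horiz (\<psi> z)) *\<^sub>R horiz (\<psi> z)"
    unfolding lam_def by (rule frame) (use B D lor4_sym in auto)
  then have "W = 0" using WX WY WE WM by simp
  then show ?thesis unfolding W_def R_def .
qed

lemma G_eq: "hyp_gauss \<psi> \<eta> = (\<lambda>w. proj3 (Gt w))"
  by (auto simp: fun_eq_iff hyp_gauss_def Gt_def vec3_eq_iff algebra_simps divide_inverse)

lemma dG_eq: "w \<in> U \<Longrightarrow> dx (hyp_gauss \<psi> \<eta>) w = proj3 (dx Gt w) \<and> dy (hyp_gauss \<psi> \<eta>) w = proj3 (dy Gt w)"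
  unfolding G_eq using dxy_linear[OF bounded_linear_proj3 dGt(1)] by auto

lemma c4_at:
  assumes z: "z \<in> U"
  shows "lor3 (dz (hyp_gauss \<psi> \<eta>) z) (dz (hyp_gauss \<psi> \<eta>) z) = - AR_diff \<psi> \<eta> z"
proof -
  note T = table[OF z] and B = basic[OF z] and D = deriv1[OF z] and P = Gt_pt[OF z] and P2 = Gt_pt2[OF z]
  have sym: "\<And>a b. lor4 a b = lor4 b a" by (rule lor4_sym)
  define lam where "lam = lor4 (dx \<psi> z) (dx \<psi> z)"
  define u where "u = \<eta> z $ 4"
  define X4 where "X4 = dx \<psi> z $ 4"
  define Y4 where "Y4 = dy \<psi> z $ 4"
  define L where "L = lor4 (\<eta> z) (dx (dx \<psi>) z)"
  define Mm where "Mm = lor4 (\<eta> z) (dy (dx \<psi>) z)"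
  define Nn where "Nn = lor4 (\<eta> z) (dy (dy \<psi>) z)"
  define ex4 where "ex4 = dx \<eta> z $ 4"
  define ey4 where "ey4 = dy \<eta> z $ 4"
  define al where "al = lor4 (dx \<psi> z) (dx (dx \<psi>) z)"
  define be where "be = lor4 (dx \<psi> z) (dy (dx \<psi>) z)"
  define gxX where "gxX = lor4 (dx Gt z) (dx \<psi> z)"
  define gxY where "gxY = lor4 (dx Gt z) (dy \<psi> z)"
  define gyX where "gyX = lor4 (dy Gt z) (dx \<psi> z)"
  define gyY where "gyY = lor4 (dy Gt z) (dy \<psi> z)"
  define gxE where "gxE = lor4 (dx Gt z) (\<eta> z)"
  define gyE where "gyE = lor4 (dy Gt z) (\<eta> z)"
  define gxM where "gxM = lor4 (dx Gt z) (horiz (\<psi> z))"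
  define gyM where "gyM = lor4 (dy Gt z) (horiz (\<psi> z))"
  define m where "m = inverse lam"
  define v where "v = inverse u"
  note defs = lam_def u_def X4_def Y4_def L_def Mm_def Nn_def ex4_def ey4_def al_def be_def
    gxX_def gxY_def gyX_def gyY_def gxE_def gyE_def gxM_def gyM_def m_def v_def
  have h1: "lam * m = 1" "u * v = 1" "Nn = lam - L" "lam * u^2 = lam - X4^2 - Y4^2"
    "ex4 * lam = -(L*X4 + Mm*Y4)" "ey4 * lam = -(Mm*X4 + Nn*Y4)"
    "gxX * u = lam - L - X4^2" "gxY * u = -(Mm + X4*Y4)" "gyX * u = -(Mm + X4*Y4)" "gyY * u = lam - Nn - Y4^2"
    "gxE = -X4 - ex4 * v^2" "gxM = - gxE" "gyE = -Y4 - ey4 * v^2" "gyM = - gyE"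
    using T unfolding defs by simp_all
  note A = alg_all[OF h1]
  have F: "lor4 a V = (lor4 a (dx \<psi> z) * lor4 (dx \<psi> z) V + lor4 a (dy \<psi> z) * lor4 (dy \<psi> z) V) * m
         + lor4 a (\<eta> z) * lor4 (\<eta> z) V - lor4 a (horiz (\<psi> z)) * lor4 (horiz (\<psi> z)) V" for a V
    unfolding m_def lam_def by (rule frame_at[OF z])
  have Yx: "dx (dy \<psi>) z = dy (dx \<psi>) z" using D(19) by simp
  have iGxGx: "lor4 (dx Gt z) (dx Gt z) = (gxX*gxX + gxY*gxY)*m + gxE*gxE - gxM*gxM"
    using F[of "dx Gt z" "dx Gt z"] by (simp add: gxX_def gxY_def gxE_def gxM_def sym)
  have iGyGy: "lor4 (dy Gt z) (dy Gt z) = (gyX*gyX + gyY*gyY)*m + gyE*gyE - gyM*gyM"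
    using F[of "dy Gt z" "dy Gt z"] by (simp add: gyX_def gyY_def gyE_def gyM_def sym)
  have iGxGy: "lor4 (dx Gt z) (dy Gt z) = (gxX*gyX + gxY*gyY)*m + gxE*gyE - gxM*gyM"
    using F[of "dx Gt z" "dy Gt z"] by (simp add: gxX_def gxY_def gxE_def gxM_def gyX_def gyY_def gyE_def gyM_def sym)
  have r1: "lor4 (dx Gt z) (dx Gt z) - lor4 (dy Gt z) (dy Gt z) = -(L - Nn + X4^2 - Y4^2)"
    unfolding iGxGx iGyGy by (rule A(3))
  have r2: "lor4 (dx Gt z) (dy Gt z) = -(Mm + X4*Y4)" unfolding iGxGy by (rule A(4))
  have x1: "lor4 (dx \<psi> z) (dx \<eta> z) = -L" "lor4 (dy \<psi> z) (dy \<eta> z) = -Nn"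
    "lor4 (dx \<psi> z) (dy \<eta> z) = -Mm" "lor4 (dy \<psi> z) (dx \<eta> z) = -Mm"
    using D(3,4,5,6) Yx unfolding defs by (simp_all add: sym)
  have hz: "dx (height \<psi>) z = X4" "dy (height \<psi>) z = Y4"
    using dxy_linear[OF bounded_linear_vec_nth dpsi(1)[OF z], of 4] unfolding defs height_def[abs_def] by auto
  have g4: "dx Gt z $ 4 = 0" "dy Gt z $ 4 = 0" using P2(3,4) .
  have mc: "mean_curv \<psi> \<eta> z = 1/2" using Hc z by auto
  have lhs: "lor3 (dz (hyp_gauss \<psi> \<eta>) z) (dz (hyp_gauss \<psi> \<eta>) z)
     = Complex ((lor4 (dx Gt z) (dx Gt z) - lor4 (dy Gt z) (dy Gt z)) / 4) (- (2 * lor4 (dx Gt z) (dy Gt z)) / 4)"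
    unfolding dz_def dG_eq[OF z, THEN conjunct1] dG_eq[OF z, THEN conjunct2] lor3_cdz lor3_proj3 g4 by simp
  have rhs: "AR_diff \<psi> \<eta> z = - Complex ((lor4 (dx \<psi> z) (dx \<eta> z) - lor4 (dy \<psi> z) (dy \<eta> z)) / 4)
        (- (lor4 (dx \<psi> z) (dy \<eta> z) + lor4 (dy \<psi> z) (dx \<eta> z)) / 4)
      + ((complex_of_real X4 - \<i> * complex_of_real Y4) / 2)^2"
    unfolding AR_diff_def hopf_def dz_def lor4_cdz mc dz_real_def hz by simp
  show ?thesis unfolding lhs rhs r1 r2 x1
    by (simp add: complex_eq_iff power2_eq_square field_simps)
qed

lemma harmonic: "harmonic_H2 U (hyp_gauss \<psi> \<eta>)"
  unfolding harmonic_H2_def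
proof (intro conjI ballI)
  show "smooth_on U (hyp_gauss \<psi> \<eta>)"
    unfolding G_eq using Ck_linear[OF U bounded_linear_proj3] sm_Gt unfolding smooth_on_def by blast
next
  fix z assume z: "z \<in> U"
  note P = Gt_pt[OF z] and B = basic[OF z]
  have u: "\<eta> z $ 4 > 0" using upos z by auto
  have "lor3 (hyp_gauss \<psi> \<eta> z) (hyp_gauss \<psi> \<eta> z) = -1"
    unfolding G_eq lor3_proj3 using P(1,2) by simp
  moreover have "hyp_gauss \<psi> \<eta> z $ 1 > 0"
  proof -
    have "\<eta> z $ 1 + horiz (\<psi> z) $ 1 > 0"
      by (rule pos_first[OF B(4) B(7) B(8) B(9)]) (use u in simp_all)
    then show ?thesis unfolding G_eq Gt_def using u by simp
  qed
  ultimately show "hyp_gauss \<psi> \<eta> z \<in> H2" by (simp add: H2_def)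
  define lap where "lap = dx (dx Gt) z + dy (dy Gt) z"
  have h: "lap + lor4 lap (Gt z) *\<^sub>R (Gt z - e4) = 0" unfolding lap_def by (rule harm_at[OF z])
  then have l4: "lap $ 4 = 0" using P(2) by (simp add: vec4_eq_iff)
  have "dx (dx (hyp_gauss \<psi> \<eta>)) z = dx (\<lambda>w. proj3 (dx Gt w)) z"
    by (rule dx_cong(1)[OF U z]) (use dG_eq in blast)
  also have "\<dots> = proj3 (dx (dx Gt) z)" using dxy_linear[OF bounded_linear_proj3 dGt(2)[OF z]] by simp
  finally have 1: "dx (dx (hyp_gauss \<psi> \<eta>)) z = proj3 (dx (dx Gt) z)" .
  have "dy (dy (hyp_gauss \<psi> \<eta>)) z = dy (\<lambda>w. proj3 (dy Gt w)) z"
    by (rule dx_cong(2)[OF U z]) (use dG_eq in blast)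
  also have "\<dots> = proj3 (dy (dy Gt) z)" using dxy_linear[OF bounded_linear_proj3 dGt(3)[OF z]] by simp
  finally have 2: "dy (dy (hyp_gauss \<psi> \<eta>)) z = proj3 (dy (dy Gt) z)" .
  have lp: "laplacian (hyp_gauss \<psi> \<eta>) z = proj3 lap"
    unfolding laplacian_def 1 2 lap_def by (simp add: vec3_eq_iff)
  have "proj3 (lap + lor4 lap (Gt z) *\<^sub>R (Gt z - e4)) = 0" unfolding h by (simp add: vec3_eq_iff)
  then show "laplacian (hyp_gauss \<psi> \<eta>) z + lor3 (laplacian (hyp_gauss \<psi> \<eta>) z) (hyp_gauss \<psi> \<eta> z) *\<^sub>R hyp_gauss \<psi> \<eta> z = 0"
    unfolding lp unfolding G_eq lor3_proj3 l4 by (simp add: vec3_eq_iff)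
qed

end

theorem mainTheorem4:
  fixes U :: "complex set" and \<psi> \<eta> :: "complex \<Rightarrow> real ^ 4"
  assumes "open U" and "connected U" and "U \<noteq> {}"
    and "conformal_immersion_H2R U \<psi>"
    and "\<not> (\<exists>c. \<forall>z\<in>U. height \<psi> z = c)"
    and "unit_normal U \<psi> \<eta>"
    and "\<forall>z\<in>U. \<eta> z $ 4 > 0"
    and "\<forall>z\<in>U. mean_curv \<psi> \<eta> z = 1/2"
  shows "harmonic_H2 U (hyp_gauss \<psi> \<eta>) \<and>
         (\<forall>z\<in>U. lor3 (dz (hyp_gauss \<psi> \<eta>) z) (dz (hyp_gauss \<psi> \<eta>) z) = - AR_diff \<psi> \<eta> z)"
proof -
  interpret cmc U \<psi> \<eta>
    by unfold_locales (use assms in auto)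
  show ?thesis using harmonic c4_at by blast
qed

end
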